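(* Let $\Gamma$ be a metrized graph that is a tree with $v$ vertices, each edge of length $1$. Then $$W(\Gamma)=(v-1)^2+\#\big\{\{e_{i_1},e_{i_2},e_{i_3}\}\subset E(\Gamma):\ e_{i_1},e_{i_2},e_{i_3}\text{ all lie on some path in }\Gamma\big\},$$ and, when $v\ge 4$, this also equals $$(v-1)^2+\#\big\{S\subset E(\Gamma):\ \#S=v-4,\ \text{contracting the edges of }S\text{ yields the path graph }P_4\big\}.$$
   Context: A metrized graph is a finite connected graph each of whose edges is identified with a closed segment of positive length, with a finite vertex set $V(\Gamma)$ containing every point of valence $\neq 2$; $E(\Gamma)$ is its edge set and $v=\#V(\Gamma)$. The Wiener index is $W(\Gamma)=\frac12\sum_{p,q\in V(\Gamma)}d(p,q)$ with $d$ the path distance. Contracting an edge means shrinking it to a point (identifying its end points). $P_4$ denotes the path graph with $4$ vertices and $3$ edges in a line (here with unit edge lengths). A path in $\Gamma$ is a simple path of edges in the tree. *)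

theory Defs
  imports Complex_Main
begin

text \<open>A tree with unit edge lengths, given combinatorially: finite vertex set V,
  edges are 2-element subsets of V, connected, and #E = #V - 1.\<close>

definition is_walk :: "'a set set \<Rightarrow> 'a list \<Rightarrow> bool" where
  "is_walk E ps \<longleftrightarrow> ps \<noteq> [] \<and> (\<forall>i. Suc i < length ps \<longrightarrow> {ps ! i, ps ! Suc i} \<in> E)"

definition is_tree :: "'a set \<Rightarrow> 'a set set \<Rightarrow> bool" where
  "is_tree V E \<longleftrightarrow> finite V \<and> (\<forall>e\<in>E. e \<subseteq> V \<and> card e = 2)
     \<and> (\<forall>p\<in>V. \<forall>q\<in>V. \<exists>ps. is_walk E ps \<and> hd ps = p \<and> last ps = q)
     \<and> card E + 1 = card V"

definition tdist :: "'a set set \<Rightarrow> 'a \<Rightarrow> 'a \<Rightarrow> nat" where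
  "tdist E p q = (LEAST n. \<exists>ps. is_walk E ps \<and> hd ps = p \<and> last ps = q \<and> length ps = Suc n)"

definition wiener :: "'a set \<Rightarrow> 'a set set \<Rightarrow> real" where
  "wiener V E = (1/2) * (\<Sum>p\<in>V. \<Sum>q\<in>V. real (tdist E p q))"

definition simple_path :: "'a set set \<Rightarrow> 'a list \<Rightarrow> bool" where
  "simple_path E ps \<longleftrightarrow> is_walk E ps \<and> distinct ps"

definition path_edges :: "'a list \<Rightarrow> 'a set set" where
  "path_edges ps = {{ps ! i, ps ! Suc i} | i. Suc i < length ps}"

definition triples_on_path :: "'a set set \<Rightarrow> 'a set set set" where
  "triples_on_path E = {T. T \<subseteq> E \<and> card T = 3 \<and>
       (\<exists>ps. simple_path E ps \<and> T \<subseteq> path_edges ps)}"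

text \<open>Contraction of an edge set S: vertices become the classes of the equivalence
  relation generated by the edges of S; the remaining edges E - S become edges between classes.\<close>
definition contr_class :: "'a set \<Rightarrow> 'a set set \<Rightarrow> 'a \<Rightarrow> 'a set" where
  "contr_class V S x = {y \<in> V. (x, y) \<in> {(a, b). {a, b} \<in> S}\<^sup>*}"

text \<open>Contracting S yields P4 iff there is
  a bijection f of the contracted vertex set onto {0..3} that induces a bijection of the
  remaining edges E - S onto the edges of P4 (this also excludes loops and multiple edges).\<close>
definition P4_edges :: "nat set set" where
  "P4_edges = {{0,1},{1,2},{2,3}}"

definition contracts_to_P4 :: "'a set \<Rightarrow> 'a set set \<Rightarrow> 'a set set \<Rightarrow> bool" where
  "contracts_to_P4 V E S \<longleftrightarrow> (\<exists>f. bij_betw f (contr_class V S ` V) {0..3::nat} \<and>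
      bij_betw (\<lambda>e. f ` (contr_class V S ` e)) (E - S) P4_edges)"

end

theory Submission
  imports Defs
begin


lemma pe_Nil[simp]: "path_edges [] = {}"
  by (simp add: path_edges_def)
lemma pe_single[simp]: "path_edges [a] = {}"
  by (simp add: path_edges_def)
lemma pe_Cons2[simp]: "path_edges (a # b # ps) = insert {a,b} (path_edges (b # ps))"
proof -
  have "path_edges (a # b # ps) = {{(a#b#ps) ! i, (a#b#ps) ! Suc i} | i. Suc i < length (a#b#ps)}"
    by (simp add: path_edges_def)
  also have "\<dots> = insert {a,b} {{(b#ps) ! i, (b#ps) ! Suc i} | i. Suc i < length (b#ps)}"
  proof (rule set_eqI, rule iffI)
    fix e assume "e \<in> {{(a#b#ps) ! i, (a#b#ps) ! Suc i} | i. Suc i < length (a#b#ps)}"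
    then obtain i where i: "e = {(a#b#ps) ! i, (a#b#ps) ! Suc i}" "Suc i < length (a#b#ps)" by blast
    show "e \<in> insert {a,b} {{(b#ps) ! i, (b#ps) ! Suc i} | i. Suc i < length (b#ps)}"
    proof (cases i)
      case 0 then show ?thesis using i by simp
    next
      case (Suc k) then show ?thesis using i by auto
    qed
  next
    fix e assume "e \<in> insert {a,b} {{(b#ps) ! i, (b#ps) ! Suc i} | i. Suc i < length (b#ps)}"
    then show "e \<in> {{(a#b#ps) ! i, (a#b#ps) ! Suc i} | i. Suc i < length (a#b#ps)}"
    proof
      assume "e = {a,b}" then show ?thesis by (simp only: mem_Collect_eq) (rule exI[of _ 0], simp)
    next
      assume "e \<in> {{(b#ps) ! i, (b#ps) ! Suc i} | i. Suc i < length (b#ps)}"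
      then obtain i where "e = {(b#ps) ! i, (b#ps) ! Suc i}" "Suc i < length (b#ps)" by blast
      then show ?thesis by (simp only: mem_Collect_eq) (rule exI[of _ "Suc i"], simp)
    qed
  qed
  also have "\<dots> = insert {a,b} (path_edges (b # ps))" by (simp add: path_edges_def)
  finally show ?thesis .
qed

lemma pe_Cons: "ps \<noteq> [] \<Longrightarrow> path_edges (a # ps) = insert {a, hd ps} (path_edges ps)"
  by (cases ps) auto

lemma walk_iff: "is_walk E ps \<longleftrightarrow> ps \<noteq> [] \<and> path_edges ps \<subseteq> E"
  by (auto simp: is_walk_def path_edges_def)

lemma pe_append: "path_edges (xs @ ys) = path_edges xs \<union> path_edges ys \<union>
   (if xs \<noteq> [] \<and> ys \<noteq> [] then {{last xs, hd ys}} else {})"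
proof (induction xs)
  case Nil then show ?case by simp
next
  case (Cons a xs)
  show ?case
  proof (cases xs)
    case Nil then show ?thesis by (cases ys) auto
  next
    case (Cons b xs') 
    then have "path_edges ((a # xs) @ ys) = insert {a, b} (path_edges (xs @ ys))" by simp
    then show ?thesis using Cons.IH Cons by auto
  qed
qed

lemma pe_rev[simp]: "path_edges (rev ps) = path_edges ps"
proof (induction ps)
  case Nil then show ?case by simp
next
  case (Cons a ps)
  show ?case
  proof (cases ps)
    case Nil then show ?thesis by simp
  next
    case (Cons b ps')
    have "path_edges (rev (a # ps)) = path_edges (rev ps) \<union> {{last (rev ps), a}}"
      using Cons by (simp add: pe_append)
    also have "\<dots> = insert {a, hd ps} (path_edges ps)" using Cons Cons.IH by (auto simp: last_rev insert_commute)
    finally show ?thesis using Cons by (simp add: pe_Cons)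
  qed
qed

lemma pe_subset_set: "e \<in> path_edges ps \<Longrightarrow> e \<subseteq> set ps"
  by (auto simp: path_edges_def)

lemma finite_pe[simp]: "finite (path_edges ps)"
proof -
  have "path_edges ps = (\<lambda>i. {ps ! i, ps ! Suc i}) ` {i. Suc i < length ps}"
    by (auto simp: path_edges_def)
  moreover have "finite {i. Suc i < length ps}" by (rule finite_subset[of _ "{..<length ps}"]) auto
  ultimately show ?thesis by simp
qed

lemma pe_Cons_sub: "path_edges ps \<subseteq> path_edges (a # ps)"
  by (cases ps) auto

lemma walk_to_path: "ps \<noteq> [] \<Longrightarrow> \<exists>qs. qs \<noteq> [] \<and> distinct qs \<and> hd qs = hd ps \<and> last qs = last ps
   \<and> path_edges qs \<subseteq> path_edges ps \<and> set qs \<subseteq> set ps"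
proof (induction ps)
  case Nil then show ?case by simp
next
  case (Cons a ps)
  show ?case
  proof (cases "ps = []")
    case True then show ?thesis by (rule_tac x="[a]" in exI) simp
  next
    case False
    then obtain qs where qs: "qs \<noteq> []" "distinct qs" "hd qs = hd ps" "last qs = last ps"
      "path_edges qs \<subseteq> path_edges ps" "set qs \<subseteq> set ps" using Cons.IH by blast
    show ?thesis
    proof (cases "a \<in> set qs")
      case True
      then obtain xs ys where xy: "qs = xs @ a # ys" by (meson split_list)
      have "path_edges (a # ys) \<subseteq> path_edges qs" using xy by (auto simp add: pe_append)
      moreover have "last (a # ys) = last qs" using xy by simp
      ultimately show ?thesis using qs xy False pe_Cons_sub[of ps a]
        by (rule_tac x="a # ys" in exI) auto
    next
      case False': False
      have "path_edges (a # qs) = insert {a, hd ps} (path_edges qs)" using qs by (simp add: pe_Cons)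
      moreover have "path_edges (a # ps) = insert {a, hd ps} (path_edges ps)" using False by (simp add: pe_Cons)
      ultimately show ?thesis using qs False False'
        by (rule_tac x="a # qs" in exI) auto
    qed
  qed
qed




lemma distinct_hd_last: "distinct ps \<Longrightarrow> ps \<noteq> [] \<Longrightarrow> hd ps = last ps \<Longrightarrow> ps = [hd ps]"
proof (cases ps)
  case (Cons a ps')
  assume d: "distinct ps" "hd ps = last ps"
  show ?thesis
  proof (cases "ps' = []")
    case False
    then have "last ps = last ps'" "last ps' \<in> set ps'" using Cons by auto
    then show ?thesis using d Cons by auto
  qed (use Cons in simp)
qed simp

lemma pe_empty: "path_edges ps = {} \<Longrightarrow> ps \<noteq> [] \<Longrightarrow> ps = [hd ps]"
  by (cases ps rule: remdups_adj.cases) auto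

lemma interior: assumes "distinct qs" "x \<in> set qs" "x \<noteq> hd qs" "x \<noteq> last qs"
  shows "\<exists>a b. a \<noteq> b \<and> {a,x} \<in> path_edges qs \<and> {x,b} \<in> path_edges qs"
proof -
  obtain xs ys where q: "qs = xs @ x # ys" using assms(2) by (meson split_list)
  have "xs \<noteq> []" using q assms(3) by auto
  have "ys \<noteq> []" using q assms(4) by auto
  have "{last xs, x} \<in> path_edges qs" using q \<open>xs \<noteq> []\<close> by (simp add: pe_append)
  moreover have "{x, hd ys} \<in> path_edges qs" using q \<open>ys \<noteq> []\<close> by (simp add: pe_append pe_Cons)
  moreover have "last xs \<noteq> hd ys" using q assms(1) \<open>xs \<noteq> []\<close> \<open>ys \<noteq> []\<close>
    by (metis disjoint_iff_not_equal distinct_append last_in_set list.set_sel(1) list.set_intros(2))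
  ultimately show ?thesis by blast
qed

lemma simple_path_rev: "simple_path E ps \<Longrightarrow> simple_path E (rev ps)"
  by (simp add: simple_path_def walk_iff)

lemma tree_finE: "is_tree V E \<Longrightarrow> finite E"
  unfolding is_tree_def by (meson Pow_iff finite_Pow_iff rev_finite_subset subsetI)

lemma degree_sum: assumes "is_tree V E"
  shows "(\<Sum>v\<in>V. card {e\<in>E. v \<in> e}) = 2 * card E"
proof -
  have fV: "finite V" and fE: "finite E" using assms tree_finE by (auto simp: is_tree_def)
  have "(\<Sum>v\<in>V. card {e\<in>E. v \<in> e}) = (\<Sum>v\<in>V. \<Sum>e\<in>E. if v \<in> e then 1 else 0)"
    using fE by (simp add: sum.inter_filter[symmetric])
  also have "\<dots> = (\<Sum>e\<in>E. \<Sum>v\<in>V. if v \<in> e then 1 else 0)" by (rule sum.swap)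
  also have "\<dots> = (\<Sum>e\<in>E. card {v\<in>V. v \<in> e})"
    using fV by (simp add: sum.inter_filter[symmetric])
  also have "\<dots> = (\<Sum>e\<in>E. 2)"
  proof (rule sum.cong)
    fix e assume "e \<in> E"
    then have "e \<subseteq> V" "card e = 2" using assms by (auto simp: is_tree_def)
    then have "{v\<in>V. v \<in> e} = e" by auto
    then show "card {v\<in>V. v \<in> e} = 2" using \<open>card e = 2\<close> by simp
  qed simp
  finally show ?thesis by simp
qed

lemma leaf_exists: assumes T: "is_tree V E" and "card V \<ge> 2"
  shows "\<exists>l u. l \<in> V \<and> u \<in> V \<and> l \<noteq> u \<and> {e\<in>E. l \<in> e} = {{l,u}}"
proof -
  have fV: "finite V" and fE: "finite E" using T tree_finE by (auto simp: is_tree_def)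
  have cE: "card E + 1 = card V" using T by (simp add: is_tree_def)
  have "\<exists>l\<in>V. card {e\<in>E. l \<in> e} < 2"
  proof (rule ccontr)
    assume "\<not> ?thesis"
    then have "(\<Sum>v\<in>V. 2) \<le> (\<Sum>v\<in>V. card {e\<in>E. v \<in> e})" by (intro sum_mono) auto
    then show False using degree_sum[OF T] cE by simp
  qed
  then obtain l where l: "l \<in> V" "card {e\<in>E. l \<in> e} < 2" by blast
  obtain q where q: "q \<in> V" "q \<noteq> l"
  proof -
    have "V - {l} \<noteq> {}" using assms(2) l(1) fV
      by (metis Diff_empty Diff_insert0 One_nat_def card.remove card_Suc_eq card_gt_0_iff
          insert_Diff less_numeral_extra(1) numeral_2_eq_2 one_le_numeral order_less_le_trans
          Suc_le_mono le_zero_eq not_less_eq_eq)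
    then show ?thesis using that by blast
  qed
  obtain ps where ps: "is_walk E ps" "hd ps = l" "last ps = q"
    using T l(1) q(1) unfolding is_tree_def by blast
  have "ps \<noteq> [hd ps]" using ps q by (metis last.simps)
  then obtain b rest where "ps = l # b # rest" using ps(1,2) unfolding walk_iff
    by (metis list.collapse list.sel(1))
  then have "{l,b} \<in> E" using ps(1) by (simp add: walk_iff)
  then have "{l,b} \<in> {e\<in>E. l \<in> e}" by simp
  then have "{e\<in>E. l \<in> e} \<noteq> {}" by blast
  moreover have "finite {e\<in>E. l \<in> e}" using fE by simp
  ultimately have "card {e\<in>E. l \<in> e} = 1" using l(2)
    by (metis One_nat_def card_0_eq less_2_cases)
  then obtain e0 where e0: "{e\<in>E. l \<in> e} = {e0}" by (meson card_1_singletonE)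
  then have "e0 \<in> E" "l \<in> e0" by auto
  then have "card e0 = 2" "e0 \<subseteq> V" using T by (auto simp: is_tree_def)
  then obtain x y where xy: "x \<noteq> y" "e0 = {x,y}" by (meson card_2_iff)
  then obtain u where "e0 = {l,u}" "u \<noteq> l" using \<open>l \<in> e0\<close> by auto
  then show ?thesis using e0 \<open>e0 \<subseteq> V\<close> l(1) by (rule_tac x=l in exI, rule_tac x=u in exI) auto
qed


lemma leaf_nb: assumes "{e\<in>E. l \<in> e} = {{l,u}}" "l \<noteq> u" "{a,l} \<in> E" shows "a = u"
proof -
  have "{a,l} \<in> {e\<in>E. l \<in> e}" using assms(3) by simp
  then have "{a,l} = {l,u}" using assms(1) by simp
  then show ?thesis using assms(2) by (metis doubleton_eq_iff)
qed

lemma leaf_not_in: assumes "{e\<in>E. l \<in> e} = {{l,u}}" "l \<noteq> u" "distinct qs" "path_edges qs \<subseteq> E"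
  "hd qs \<noteq> l" "last qs \<noteq> l" shows "l \<notin> set qs"
proof
  assume "l \<in> set qs"
  then obtain a b where "a \<noteq> b" "{a,l} \<in> path_edges qs" "{l,b} \<in> path_edges qs"
    using interior[OF assms(3)] assms(5,6) by metis
  then have "{a,l} \<in> E" "{b,l} \<in> E" using assms(4) by (auto simp: insert_commute)
  then show False using leaf_nb[OF assms(1,2)] \<open>a \<noteq> b\<close> by metis
qed

lemma avoid_edges: assumes "l \<notin> set qs" "path_edges qs \<subseteq> E" shows "path_edges qs \<subseteq> E - {{l,u}}"
proof
  fix e assume e: "e \<in> path_edges qs"
  then have "e \<subseteq> set qs" by (rule pe_subset_set)
  then have "e \<noteq> {l,u}" using assms(1) by blast
  then show "e \<in> E - {{l,u}}" using e assms(2) by blast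
qed

lemma leaf_remove: assumes T: "is_tree V E" and l: "l \<in> V" "u \<in> V" "l \<noteq> u" "{e\<in>E. l \<in> e} = {{l,u}}"
  shows "is_tree (V - {l}) (E - {{l,u}})"
proof -
  have fV: "finite V" and fE: "finite E" using T tree_finE by (auto simp: is_tree_def)
  have cE: "card E + 1 = card V" using T by (simp add: is_tree_def)
  have eV: "\<forall>e\<in>E. e \<subseteq> V \<and> card e = 2" using T by (simp add: is_tree_def)
  have e1: "\<forall>e\<in>E - {{l,u}}. e \<subseteq> V - {l} \<and> card e = 2"
  proof
    fix e assume e: "e \<in> E - {{l,u}}"
    then have "l \<notin> e" using l(4) by blast
    moreover have "e \<subseteq> V \<and> card e = 2" using e eV by blast
    ultimately show "e \<subseteq> V - {l} \<and> card e = 2" by blast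
  qed
  have "{l,u} \<in> E" using l(4) by blast
  then have "card (E - {{l,u}}) = card E - 1" by (simp add: card_Diff_singleton)
  moreover have "card (V - {l}) = card V - 1" using l(1) by (simp add: card_Diff_singleton)
  moreover have "card E \<ge> 1" using \<open>{l,u} \<in> E\<close> fE
    by (metis One_nat_def Suc_leI card_gt_0_iff empty_iff)
  ultimately have c: "card (E - {{l,u}}) + 1 = card (V - {l})" using cE by simp
  have conn: "\<forall>p\<in>V - {l}. \<forall>q\<in>V - {l}. \<exists>ps. is_walk (E - {{l,u}}) ps \<and> hd ps = p \<and> last ps = q"
  proof (intro ballI)
    fix p q assume p: "p \<in> V - {l}" and q: "q \<in> V - {l}"
    have "p \<in> V" "q \<in> V" using p q by auto
    then obtain ps where ps: "is_walk E ps" "hd ps = p" "last ps = q" using T unfolding is_tree_def by blast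
    have "ps \<noteq> []" "path_edges ps \<subseteq> E" using ps(1) by (auto simp: walk_iff)
    then obtain qs where qs: "qs \<noteq> []" "distinct qs" "hd qs = p" "last qs = q" "path_edges qs \<subseteq> E"
      using walk_to_path[of ps] ps(2,3) by blast
    have "hd qs \<noteq> l" "last qs \<noteq> l" using qs(3,4) p q by auto
    then have "l \<notin> set qs" by (rule leaf_not_in[OF l(4,3) qs(2,5)])
    then have "path_edges qs \<subseteq> E - {{l,u}}" by (rule avoid_edges[OF _ qs(5)])
    then have "is_walk (E - {{l,u}}) qs" using qs(1) by (simp add: walk_iff)
    then show "\<exists>ps. is_walk (E - {{l,u}}) ps \<and> hd ps = p \<and> last ps = q"
      using qs(3,4) by blast
  qed
  have "finite (V - {l})" using fV by simp
  then show ?thesis unfolding is_tree_def using e1 c conn by blast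
qed

lemma tree_unique_aux:
  "\<And>V E. card V = n \<Longrightarrow> is_tree V E \<Longrightarrow> \<forall>ps qs. simple_path E ps \<longrightarrow> simple_path E qs \<longrightarrow>
     hd ps = hd qs \<longrightarrow> last ps = last qs \<longrightarrow> ps = qs"
proof (induction n rule: less_induct)
  case (less n V E)
  have fV: "finite V" and fE: "finite E" using less.prems tree_finE by (auto simp: is_tree_def)
  have cE: "card E + 1 = card V" using less.prems by (simp add: is_tree_def)
  show ?case
  proof (cases "card V \<ge> 2")
    case False
    then have "card E = 0" using cE by simp
    then have "E = {}" using fE by simp
    then have one: "simple_path E ps \<Longrightarrow> ps = [hd ps]" for ps
      using pe_empty by (auto simp: simple_path_def walk_iff)
    show ?thesis
    proof (intro allI impI)
      fix ps qs assume a: "simple_path E ps" "simple_path E qs" "hd ps = hd qs" "last ps = last qs"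
      have "ps = [hd ps]" "qs = [hd qs]" using one a(1,2) by auto
      then show "ps = qs" using a(3) by metis
    qed
  next
    case True
    obtain l u where l: "l \<in> V" "u \<in> V" "l \<noteq> u" "{e\<in>E. l \<in> e} = {{l,u}}"
      using leaf_exists[OF less.prems(2) True] by blast
    define V' where "V' = V - {l}"
    define E' where "E' = E - {{l,u}}"
    have T': "is_tree V' E'" using leaf_remove[OF less.prems(2) l] by (simp add: V'_def E'_def)
    have "card V' = card V - 1" using l(1) by (simp add: V'_def card_Diff_singleton)
    then have lt: "card V' < n" using less.prems(1) True by simp
    have IH: "simple_path E' ps \<Longrightarrow> simple_path E' qs \<Longrightarrow> hd ps = hd qs \<Longrightarrow> last ps = last qs \<Longrightarrow> ps = qs" for ps qs
      using less.IH[OF lt refl T'] by blast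
    have avoid: "simple_path E ps \<Longrightarrow> l \<notin> set ps \<Longrightarrow> simple_path E' ps" for ps
    proof -
      assume "simple_path E ps" "l \<notin> set ps"
      then have "path_edges ps \<subseteq> E" "ps \<noteq> []" "distinct ps" "l \<notin> set ps"
        by (auto simp: simple_path_def walk_iff)
      then have "path_edges ps \<subseteq> E'" "ps \<noteq> []" "distinct ps" unfolding E'_def
        using avoid_edges[of l ps E u] by auto
      then show "simple_path E' ps" by (simp add: simple_path_def walk_iff)
    qed
    have H: "ps = qs" if hp: "simple_path E ps" "simple_path E qs" "hd ps = l" "hd qs = l" "last ps = last qs" for ps qs
    proof -
      have dp: "distinct ps" "ps \<noteq> []" "path_edges ps \<subseteq> E" and dq: "distinct qs" "qs \<noteq> []" "path_edges qs \<subseteq> E"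
        using hp by (auto simp: simple_path_def walk_iff)
      obtain ps' where ps: "ps = l # ps'" using dp(2) hp(3) by (metis list.collapse)
      obtain qs' where qs: "qs = l # qs'" using dq(2) hp(4) by (metis list.collapse)
      show ?thesis
      proof (cases "ps' = [] \<or> qs' = []")
        case True
        then have "last ps = l \<or> last qs = l" using ps qs by auto
        then have "last ps = l" "last qs = l" using hp(5) by auto
        then show ?thesis using distinct_hd_last[OF dp(1,2)] distinct_hd_last[OF dq(1,2)] hp(3,4) by metis
      next
        case False
        have "{l, hd ps'} \<in> E" using dp(3) ps False by (auto simp: pe_Cons)
        then have h1: "hd ps' = u" using leaf_nb[OF l(4,3)] by (simp add: insert_commute)
        have "{l, hd qs'} \<in> E" using dq(3) qs False by (auto simp: pe_Cons)
        then have h2: "hd qs' = u" using leaf_nb[OF l(4,3)] by (simp add: insert_commute)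
        have "simple_path E ps'" "l \<notin> set ps'" using dp ps False pe_Cons_sub[of ps' l]
          by (auto simp: simple_path_def walk_iff)
        then have s1: "simple_path E' ps'" by (rule avoid)
        have "simple_path E qs'" "l \<notin> set qs'" using dq qs False pe_Cons_sub[of qs' l]
          by (auto simp: simple_path_def walk_iff)
        then have s2: "simple_path E' qs'" by (rule avoid)
        have "last ps' = last qs'" using hp(5) ps qs False by auto
        then show ?thesis using IH[OF s1 s2] h1 h2 ps qs by simp
      qed
    qed
    show ?thesis
    proof (intro allI impI)
      fix ps qs assume a: "simple_path E ps" "simple_path E qs" "hd ps = hd qs" "last ps = last qs"
      have dp: "distinct ps" "ps \<noteq> []" "path_edges ps \<subseteq> E" and dq: "distinct qs" "qs \<noteq> []" "path_edges qs \<subseteq> E"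
        using a by (auto simp: simple_path_def walk_iff)
      show "ps = qs"
      proof (cases "l \<in> set ps \<or> l \<in> set qs")
        case False
        then show ?thesis using IH avoid a by metis
      next
        case True
        have "hd ps = l \<or> last ps = l"
        proof (rule ccontr)
          assume "\<not> ?thesis"
          then have "l \<notin> set ps" "l \<notin> set qs"
            using leaf_not_in[OF l(4,3) dp(1,3)] leaf_not_in[OF l(4,3) dq(1,3)] a(3,4) by auto
          then show False using True by blast
        qed
        then show ?thesis
        proof
          assume "hd ps = l" then show ?thesis using H a by metis
        next
          assume "last ps = l"
          then have "rev ps = rev qs" using H[OF simple_path_rev[OF a(1)] simple_path_rev[OF a(2)]] a dp(2) dq(2)
            by (simp add: hd_rev last_rev)
          then show ?thesis by simp
        qed
      qed
    qed
  qed
qed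

lemma tree_unique: "is_tree V E \<Longrightarrow> simple_path E ps \<Longrightarrow> simple_path E qs \<Longrightarrow>
     hd ps = hd qs \<Longrightarrow> last ps = last qs \<Longrightarrow> ps = qs"
  using tree_unique_aux by blast




definition spath :: "'a set set \<Rightarrow> 'a \<Rightarrow> 'a \<Rightarrow> 'a list" where
  "spath E p q = (THE ps. simple_path E ps \<and> hd ps = p \<and> last ps = q)"

definition sep :: "'a set set \<Rightarrow> 'a set \<Rightarrow> 'a \<Rightarrow> 'a \<Rightarrow> bool" where
  "sep E e x y \<longleftrightarrow> e \<in> path_edges (spath E x y)"

definition conn :: "'a set set \<Rightarrow> 'a \<Rightarrow> 'a \<Rightarrow> bool" where
  "conn F x y \<longleftrightarrow> (\<exists>ps. ps \<noteq> [] \<and> hd ps = x \<and> last ps = y \<and> path_edges ps \<subseteq> F)"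

lemma card_pe_distinct: "distinct ps \<Longrightarrow> card (path_edges ps) = length ps - 1"
proof (induction ps)
  case (Cons a ps)
  show ?case
  proof (cases "ps = []")
    case False
    have "{a, hd ps} \<notin> path_edges ps"
      using pe_subset_set Cons.prems by fastforce
    then show ?thesis using Cons False by (simp add: pe_Cons)
  qed simp
qed simp

lemma conn_refl: "conn F x x"
  unfolding conn_def by (rule exI[of _ "[x]"]) simp

lemma conn_sym: "conn F x y \<Longrightarrow> conn F y x"
  unfolding conn_def by (metis Nil_is_rev_conv hd_rev last_rev pe_rev)

lemma conn_snoc: "conn F x y \<Longrightarrow> {y,z} \<in> F \<Longrightarrow> conn F x z"
proof -
  assume "conn F x y" "{y,z} \<in> F"
  then obtain ps where ps: "ps \<noteq> []" "hd ps = x" "last ps = y" "path_edges ps \<subseteq> F" unfolding conn_def by blast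
  have "path_edges (ps @ [z]) = insert {y,z} (path_edges ps)" using ps by (simp add: pe_append)
  then show ?thesis unfolding conn_def using ps \<open>{y,z} \<in> F\<close> by (rule_tac x="ps @ [z]" in exI) auto
qed

lemma conn_trans_aux: "ps \<noteq> [] \<Longrightarrow> path_edges ps \<subseteq> F \<Longrightarrow> conn F x (hd ps) \<Longrightarrow> conn F x (last ps)"
proof (induction ps arbitrary: x rule: rev_induct)
  case (snoc a ps)
  show ?case
  proof (cases "ps = []")
    case True then show ?thesis using snoc by simp
  next
    case False
    have pe: "path_edges (ps @ [a]) = insert {last ps, a} (path_edges ps)" using False by (simp add: pe_append)
    have h: "hd (ps @ [a]) = hd ps" using False by simp
    have "path_edges ps \<subseteq> F" "{last ps, a} \<in> F" using snoc.prems(2) pe by auto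
    then have "conn F x (last ps)" using snoc.IH[OF False] snoc.prems(3) h by simp
    then have "conn F x a" using conn_snoc \<open>{last ps, a} \<in> F\<close> by metis
    then show ?thesis by simp
  qed
qed simp

lemma conn_trans: assumes "conn F x y" "conn F y z" shows "conn F x z"
proof -
  obtain ps where ps: "ps \<noteq> []" "hd ps = y" "last ps = z" "path_edges ps \<subseteq> F"
    using assms(2) unfolding conn_def by blast
  show ?thesis using conn_trans_aux[OF ps(1,4)] ps(2,3) assms(1) by simp
qed

lemma walk_set: "ps \<noteq> [] \<Longrightarrow> path_edges ps \<subseteq> E \<Longrightarrow> hd ps \<in> V \<Longrightarrow> \<forall>e\<in>E. e \<subseteq> V \<Longrightarrow> set ps \<subseteq> V"
proof (induction ps)
  case (Cons a ps)
  show ?case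
  proof (cases "ps = []")
    case False
    then have "{a, hd ps} \<in> E" using Cons.prems(2) by (auto simp: pe_Cons)
    then have h: "hd ps \<in> V" using Cons.prems(4) by blast
    have "path_edges ps \<subseteq> E" using pe_Cons_sub[of ps a] Cons.prems(2) by (rule subset_trans)
    then have "set ps \<subseteq> V" using Cons.IH[OF False _ h Cons.prems(4)] by simp
    then show ?thesis using Cons.prems(3) by simp
  qed (use Cons in auto)
qed simp

locale tree = fixes V :: "'a set" and E :: "'a set set" assumes T: "is_tree V E"
begin

lemma finV: "finite V" using T by (simp add: is_tree_def)
lemma finE: "finite E" using T by (rule tree_finE)
lemma eV: "e \<in> E \<Longrightarrow> e \<subseteq> V" using T by (simp add: is_tree_def)
lemma e2: "e \<in> E \<Longrightarrow> card e = 2" using T by (simp add: is_tree_def)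
lemma cE: "card E + 1 = card V" using T by (simp add: is_tree_def)
lemma edge_ne: "{p,q} \<in> E \<Longrightarrow> p \<noteq> q" using e2 by fastforce

lemma sp_exists: assumes "p \<in> V" "q \<in> V" shows "\<exists>ps. simple_path E ps \<and> hd ps = p \<and> last ps = q"
proof -
  obtain ps where ps: "is_walk E ps" "hd ps = p" "last ps = q" using T assms unfolding is_tree_def by blast
  have "ps \<noteq> []" "path_edges ps \<subseteq> E" using ps(1) by (auto simp: walk_iff)
  then obtain qs where qs: "qs \<noteq> []" "distinct qs" "hd qs = hd ps" "last qs = last ps" "path_edges qs \<subseteq> path_edges ps"
    using walk_to_path by blast
  then have "simple_path E qs" using \<open>path_edges ps \<subseteq> E\<close> by (auto simp: simple_path_def walk_iff)
  then show ?thesis using qs(3,4) ps(2,3) by blast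
qed

lemma sp_eq: "simple_path E ps \<Longrightarrow> spath E (hd ps) (last ps) = ps"
  unfolding spath_def
  apply (rule the_equality)
   apply simp
  apply (metis tree_unique[OF T])
  done

lemma sp_eq': "simple_path E ps \<Longrightarrow> hd ps = p \<Longrightarrow> last ps = q \<Longrightarrow> spath E p q = ps"
  using sp_eq by blast

lemma sp: assumes "p \<in> V" "q \<in> V"
  shows "simple_path E (spath E p q) \<and> hd (spath E p q) = p \<and> last (spath E p q) = q"
  using sp_exists[OF assms] sp_eq by metis

lemma sp_dist: "p \<in> V \<Longrightarrow> q \<in> V \<Longrightarrow> distinct (spath E p q)"
  using sp by (simp add: simple_path_def)
lemma sp_ne: "p \<in> V \<Longrightarrow> q \<in> V \<Longrightarrow> spath E p q \<noteq> []"
  using sp by (simp add: simple_path_def walk_iff)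
lemma sp_E: "p \<in> V \<Longrightarrow> q \<in> V \<Longrightarrow> path_edges (spath E p q) \<subseteq> E"
  using sp by (simp add: simple_path_def walk_iff)
lemma sp_hd: "p \<in> V \<Longrightarrow> q \<in> V \<Longrightarrow> hd (spath E p q) = p"
  using sp by simp
lemma sp_last: "p \<in> V \<Longrightarrow> q \<in> V \<Longrightarrow> last (spath E p q) = q"
  using sp by simp

lemma sp_refl: "spath E p p = [p]"
  by (rule sp_eq') (auto simp: simple_path_def walk_iff)

lemma sp_rev: "p \<in> V \<Longrightarrow> q \<in> V \<Longrightarrow> spath E q p = rev (spath E p q)"
  by (rule sp_eq') (auto simp: simple_path_rev sp hd_rev last_rev)

lemma sp_edge: "{p,q} \<in> E \<Longrightarrow> spath E p q = [p,q]"
  by (rule sp_eq') (auto simp: simple_path_def walk_iff edge_ne)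

lemma set_sp: "p \<in> V \<Longrightarrow> q \<in> V \<Longrightarrow> set (spath E p q) \<subseteq> V"
  by (rule walk_set[OF sp_ne sp_E]) (auto simp: sp_hd eV)

lemma tdist_sp: assumes "p \<in> V" "q \<in> V" shows "tdist E p q = card (path_edges (spath E p q))"
proof -
  let ?s = "spath E p q"
  have len: "card (path_edges ?s) = length ?s - 1" using card_pe_distinct sp_dist assms by blast
  have w: "is_walk E ?s" using sp assms by (simp add: simple_path_def)
  have "(LEAST n. \<exists>ps. is_walk E ps \<and> hd ps = p \<and> last ps = q \<and> length ps = Suc n) = length ?s - 1"
  proof (rule Least_equality)
    show "\<exists>ps. is_walk E ps \<and> hd ps = p \<and> last ps = q \<and> length ps = Suc (length ?s - 1)"
      using w sp assms sp_ne[OF assms] by (rule_tac x="?s" in exI) auto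
  next
    fix n assume "\<exists>ps. is_walk E ps \<and> hd ps = p \<and> last ps = q \<and> length ps = Suc n"
    then obtain ps where ps: "is_walk E ps" "hd ps = p" "last ps = q" "length ps = Suc n" by blast
    have "ps \<noteq> []" "path_edges ps \<subseteq> E" using ps(1) by (auto simp: walk_iff)
    then obtain qs where qs: "qs \<noteq> []" "distinct qs" "hd qs = hd ps" "last qs = last ps" "path_edges qs \<subseteq> path_edges ps" "set qs \<subseteq> set ps"
      using walk_to_path by blast
    have "simple_path E qs" using qs \<open>path_edges ps \<subseteq> E\<close> by (auto simp: simple_path_def walk_iff)
    then have "?s = qs" by (rule sp_eq') (simp_all add: qs ps)
    have "length qs = card (set qs)" using qs(2) by (simp add: distinct_card)
    also have "\<dots> \<le> card (set ps)" by (rule card_mono) (simp_all add: qs(6))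
    also have "\<dots> \<le> length ps" by (rule card_length)
    finally have "length qs \<le> length ps" .
    then show "length ?s - 1 \<le> n" using \<open>?s = qs\<close> ps(4) by simp
  qed
  then show ?thesis using len by (simp add: tdist_def)
qed

lemma conn_iff: assumes "x \<in> V" "y \<in> V"
  shows "conn (E - S) x y \<longleftrightarrow> (\<forall>e\<in>S. \<not> sep E e x y)"
proof
  assume "conn (E - S) x y"
  then obtain ps where ps: "ps \<noteq> []" "hd ps = x" "last ps = y" "path_edges ps \<subseteq> E - S"
    unfolding conn_def by blast
  obtain qs where qs: "qs \<noteq> []" "distinct qs" "hd qs = hd ps" "last qs = last ps" "path_edges qs \<subseteq> path_edges ps"
    using walk_to_path[OF ps(1)] by blast
  have qs5: "path_edges qs \<subseteq> E - S" using qs(5) ps(4) by blast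
  have "simple_path E qs" using qs qs5 by (auto simp: simple_path_def walk_iff)
  then have sq: "spath E x y = qs" by (rule sp_eq') (simp_all add: qs ps)
  note qs = qs(1-4) qs5
  show "\<forall>e\<in>S. \<not> sep E e x y" unfolding sep_def sq using qs(5) by blast
next
  assume "\<forall>e\<in>S. \<not> sep E e x y"
  then have "path_edges (spath E x y) \<subseteq> E - S" using sp_E[OF assms] by (auto simp: sep_def)
  then show "conn (E - S) x y" unfolding conn_def using sp_ne[OF assms] sp_hd[OF assms] sp_last[OF assms] by blast
qed

lemma sep_refl[simp]: "\<not> sep E e x x"
  by (simp add: sep_def sp_refl)

lemma sep_sym: "x \<in> V \<Longrightarrow> y \<in> V \<Longrightarrow> sep E e x y = sep E e y x"
  by (simp add: sep_def sp_rev[of x y])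

lemma sep_edge: "{p,q} \<in> E \<Longrightarrow> sep E e p q \<longleftrightarrow> e = {p,q}"
  by (simp add: sep_def sp_edge)

lemma sides: assumes e: "{a,b} \<in> E" and x: "x \<in> V"
  shows "conn (E - {{a,b}}) a x \<or> conn (E - {{a,b}}) b x"
proof (cases "sep E {a,b} a x")
  case False
  have "a \<in> V" using eV[OF e] by blast
  then show ?thesis using conn_iff[OF _ x, of a "{{a,b}}"] False by simp
next
  case True
  have aV: "a \<in> V" using eV[OF e] by blast
  let ?s = "spath E a x"
  have s: "distinct ?s" "?s \<noteq> []" "hd ?s = a" "last ?s = x" "path_edges ?s \<subseteq> E"
    using sp_dist[OF aV x] sp_ne[OF aV x] sp_hd[OF aV x] sp_last[OF aV x] sp_E[OF aV x] by auto
  obtain rest where r: "?s = a # rest" using s(2,3) by (metis list.collapse)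
  have "rest \<noteq> []" using True r by (auto simp: sep_def)
  then have pe: "path_edges ?s = insert {a, hd rest} (path_edges rest)" using r by (simp add: pe_Cons)
  have an: "a \<notin> set rest" using s(1) r by simp
  have "{a,b} \<notin> path_edges rest" using an pe_subset_set[of "{a,b}" rest] by blast
  then have "{a,b} = {a, hd rest}" using True pe by (auto simp: sep_def)
  then have "hd rest = b" using edge_ne[OF e] by (auto simp: doubleton_eq_iff)
  moreover have "last rest = x" using s(4) r \<open>rest \<noteq> []\<close> by simp
  moreover have "path_edges rest \<subseteq> E - {{a,b}}" using s(5) pe \<open>{a,b} \<notin> path_edges rest\<close> by auto
  ultimately have "conn (E - {{a,b}}) b x" unfolding conn_def using \<open>rest \<noteq> []\<close> by blast
  then show ?thesis by blast
qed

lemma sep_xor: assumes e: "e \<in> E" and V: "x \<in> V" "y \<in> V" "z \<in> V"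
  shows "sep E e x y \<longleftrightarrow> (sep E e z x \<noteq> sep E e z y)"
proof -
  obtain a b where ab: "e = {a,b}" "a \<noteq> b" using e2[OF e] by (meson card_2_iff)
  have aV: "a \<in> V" "b \<in> V" using eV[OF e] ab by auto
  let ?F = "E - {e}"
  have c: "conn ?F w1 w2 \<longleftrightarrow> \<not> sep E e w1 w2" if "w1 \<in> V" "w2 \<in> V" for w1 w2
    using conn_iff[OF that, of "{e}"] by simp
  have nab: "\<not> conn ?F a b" using c[OF aV] sep_edge[of a b e] e ab by simp
  have C: "conn ?F w1 w2 \<longleftrightarrow> (conn ?F a w1 \<longleftrightarrow> conn ?F a w2)" if w: "w1 \<in> V" "w2 \<in> V" for w1 w2
  proof -
    have s1: "conn ?F a w1 \<or> conn ?F b w1" and s2: "conn ?F a w2 \<or> conn ?F b w2"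
      using sides[of a b] e ab w by simp_all
    show ?thesis
    proof (cases "conn ?F a w1")
      case True
      show ?thesis
      proof (cases "conn ?F a w2")
        case True
        have "conn ?F w1 w2" by (rule conn_trans[OF conn_sym[OF \<open>conn ?F a w1\<close>] True])
        then show ?thesis using \<open>conn ?F a w1\<close> True by blast
      next
        case False
        have "\<not> conn ?F w1 w2"
        proof
          assume "conn ?F w1 w2" then have "conn ?F a w2" by (rule conn_trans[OF \<open>conn ?F a w1\<close>])
          then show False using False by blast
        qed
        then show ?thesis using True False by blast
      qed
    next
      case False
      then have b1: "conn ?F b w1" using s1 by blast
      show ?thesis
      proof (cases "conn ?F a w2")
        case True
        have "\<not> conn ?F w1 w2"
        proof
          assume "conn ?F w1 w2" then have "conn ?F a w1" by (rule conn_trans[OF True conn_sym])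
          then show False using False by blast
        qed
        then show ?thesis using True False by blast
      next
        case False': False
        then have "conn ?F b w2" using s2 by blast
        then have "conn ?F w1 w2" by (rule conn_trans[OF conn_sym[OF b1]])
        then show ?thesis using False False' by blast
      qed
    qed
  qed
  have q1: "sep E e x y \<longleftrightarrow> \<not> (conn ?F a x \<longleftrightarrow> conn ?F a y)" using C[OF V(1,2)] c[OF V(1,2)] by blast
  have q2: "sep E e z x \<longleftrightarrow> \<not> (conn ?F a z \<longleftrightarrow> conn ?F a x)" using C[OF V(3,1)] c[OF V(3,1)] by blast
  have q3: "sep E e z y \<longleftrightarrow> \<not> (conn ?F a z \<longleftrightarrow> conn ?F a y)" using C[OF V(3,2)] c[OF V(3,2)] by blast
  show ?thesis unfolding q1 q2 q3 by blast
qed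

lemma sameside: assumes "e \<in> E" "f \<in> E" "f \<noteq> e" "p \<in> f" "q \<in> f" shows "\<not> sep E e p q"
proof (cases "p = q")
  case False
  obtain x y where xy: "f = {x,y}" "x \<noteq> y" using e2[OF assms(2)] by (meson card_2_iff)
  then have "f = {p,q}" using assms(4,5) False by auto
  then show ?thesis using sep_edge assms by auto
qed simp

end



lemma pe_take_sub: "path_edges (take n ps) \<subseteq> path_edges ps"
proof -
  have "path_edges (take n ps @ drop n ps) = path_edges (take n ps) \<union> path_edges (drop n ps) \<union>
     (if take n ps \<noteq> [] \<and> drop n ps \<noteq> [] then {{last (take n ps), hd (drop n ps)}} else {})"
    by (rule pe_append)
  then have "path_edges (take n ps) \<subseteq> path_edges (take n ps @ drop n ps)" by blast
  then show ?thesis by simp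
qed

lemma edge_inj: assumes "distinct ps" "Suc i < length ps" "Suc k < length ps"
  "{ps!k, ps!Suc k} = {ps!i, ps!Suc i}" shows "k = i"
proof -
  have "(ps!k = ps!i \<and> ps!Suc k = ps!Suc i) \<or> (ps!k = ps!Suc i \<and> ps!Suc k = ps!i)"
    using assms(4) by (simp add: doubleton_eq_iff)
  then show ?thesis
  proof
    assume "ps!k = ps!i \<and> ps!Suc k = ps!Suc i"
    then show ?thesis using assms nth_eq_iff_index_eq by (metis Suc_lessD)
  next
    assume h: "ps!k = ps!Suc i \<and> ps!Suc k = ps!i"
    then have "k = Suc i" "Suc k = i" using assms nth_eq_iff_index_eq by (metis Suc_lessD)+
    then show ?thesis by simp
  qed
qed

lemma pe_take_mem: assumes "distinct ps" "Suc i < length ps" "j < length ps"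
  shows "{ps!i, ps!Suc i} \<in> path_edges (take (Suc j) ps) \<longleftrightarrow> i < j"
proof
  assume "{ps!i, ps!Suc i} \<in> path_edges (take (Suc j) ps)"
  then obtain k where k: "{ps!i, ps!Suc i} = {take (Suc j) ps ! k, take (Suc j) ps ! Suc k}"
    "Suc k < length (take (Suc j) ps)" unfolding path_edges_def by blast
  then have kj: "Suc k < Suc j" "Suc k < length ps" by auto
  then have "{ps!k, ps!Suc k} = {ps!i, ps!Suc i}" using k(1) by simp
  then have "k = i" using edge_inj[OF assms(1,2) kj(2)] by simp
  then show "i < j" using kj by simp
next
  assume "i < j"
  then have "Suc i < length (take (Suc j) ps)" using assms by simp
  moreover have "{ps!i, ps!Suc i} = {take (Suc j) ps ! i, take (Suc j) ps ! Suc i}" using \<open>i < j\<close> by simp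
  ultimately show "{ps!i, ps!Suc i} \<in> path_edges (take (Suc j) ps)" unfolding path_edges_def by blast
qed

context tree begin

lemma simple_set: assumes "simple_path E ps" "2 \<le> length ps" shows "set ps \<subseteq> V"
proof -
  obtain a b rest where ps: "ps = a # b # rest" using assms(2)
    by (metis One_nat_def Suc_1 Suc_le_length_iff)
  have w: "ps \<noteq> []" "path_edges ps \<subseteq> E" using assms(1) by (auto simp: simple_path_def walk_iff)
  then have "{a,b} \<in> E" using ps by simp
  then have "hd ps \<in> V" using eV ps by auto
  show ?thesis by (rule walk_set[OF w \<open>hd ps \<in> V\<close>]) (use eV in blast)
qed

lemma simple_take: assumes "simple_path E ps" "0 < n" shows "simple_path E (take n ps)"
proof -
  have "ps \<noteq> []" "distinct ps" "path_edges ps \<subseteq> E" using assms(1) by (auto simp: simple_path_def walk_iff)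
  then show ?thesis using pe_take_sub[of n ps] assms(2) by (auto simp: simple_path_def walk_iff)
qed

lemma pos: assumes sp: "simple_path E ps" and i: "Suc i < length ps" and j: "j < length ps"
  shows "sep E {ps!i, ps!Suc i} (hd ps) (ps!j) \<longleftrightarrow> i < j"
proof -
  have d: "distinct ps" using sp by (simp add: simple_path_def)
  have "spath E (hd ps) (ps!j) = take (Suc j) ps"
  proof (rule sp_eq')
    show "simple_path E (take (Suc j) ps)" using simple_take[OF sp] by simp
    show "hd (take (Suc j) ps) = hd ps" using j by (cases ps) auto
    show "last (take (Suc j) ps) = ps ! j" using j by (simp add: take_Suc_conv_app_nth)
  qed
  then show ?thesis unfolding sep_def using pe_take_mem[OF d i j] by simp
qed

lemma subpath: assumes x: "x \<in> V" and z: "z \<in> V" and w: "w \<in> set (spath E x z)"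
  shows "path_edges (spath E x w) \<subseteq> path_edges (spath E x z)"
proof -
  obtain xs ys where s: "spath E x z = xs @ w # ys" using w by (meson split_list)
  have sp0: "simple_path E (spath E x z)" using sp x z by blast
  have "take (Suc (length xs)) (spath E x z) = xs @ [w]" using s by simp
  then have spw: "simple_path E (xs @ [w])" using simple_take[OF sp0, of "Suc (length xs)"] by simp
  have "hd (xs @ [w]) = x" using s sp_hd[OF x z] by (cases xs) auto
  then have "spath E x w = xs @ [w]" using sp_eq'[OF spw] by simp
  then show ?thesis using pe_take_sub[of "Suc (length xs)" "spath E x z"] \<open>take _ _ = xs @ [w]\<close> by simp
qed

end



context tree begin

lemma last_edge: assumes a: "a \<in> V" and z: "z \<in> V" and az: "z \<noteq> a"
  obtains ys where "ys \<noteq> []" "spath E a z = ys @ [z]" "spath E a (last ys) = ys"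
     "{last ys, z} \<in> path_edges (spath E a z)" "last ys \<in> V" "z \<notin> set ys"
proof -
  let ?s = "spath E a z"
  have s: "simple_path E ?s" "?s \<noteq> []" "hd ?s = a" "last ?s = z" using sp[OF a z] sp_ne[OF a z] by auto
  obtain ys where e: "?s = ys @ [z]" using s(2,4) by (metis append_butlast_last_id)
  have ne: "ys \<noteq> []"
  proof
    assume "ys = []" then have "?s = [z]" using e by simp
    then show False using s(3) az by simp
  qed
  have "take (length ys) ?s = ys" using e by simp
  moreover have "0 < length ys" using ne by simp
  ultimately have spy: "simple_path E ys" using simple_take[OF s(1), of "length ys"] by simp
  have "hd ys = a" using ne e s(3) by (metis hd_append2)
  then have sw: "spath E a (last ys) = ys" using sp_eq'[OF spy] by simp
  have "path_edges (ys @ [z]) = path_edges ys \<union> {{last ys, z}}" using ne by (simp add: pe_append)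
  then have pe: "{last ys, z} \<in> path_edges ?s" using e by simp
  have "set ?s \<subseteq> V" using set_sp[OF a z] .
  then have "last ys \<in> V" using ne e by auto
  moreover have "z \<notin> set ys" using sp_dist[OF a z] e by simp
  ultimately show ?thesis using that ne e sw pe by blast
qed

definition lastedge :: "'a \<Rightarrow> 'a \<Rightarrow> 'a set" where
  "lastedge a z = {last (butlast (spath E a z)), z}"

lemma lastedge_inj: assumes a: "a \<in> V" shows "inj_on (lastedge a) (V - {a})"
proof (rule inj_onI)
  fix z z' assume z: "z \<in> V - {a}" and z': "z' \<in> V - {a}" and eq: "lastedge a z = lastedge a z'"
  show "z = z'"
  proof (rule ccontr)
    assume ne: "z \<noteq> z'"
    obtain ys where L: "ys \<noteq> []" "spath E a z = ys @ [z]" "spath E a (last ys) = ys" "z \<notin> set ys"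
      using last_edge[OF a] z by auto
    obtain ys' where L': "ys' \<noteq> []" "spath E a z' = ys' @ [z']" "spath E a (last ys') = ys'"
      using last_edge[OF a] z' by auto
    have "{last ys, z} = {last ys', z'}" using eq L(2) L'(2) by (simp add: lastedge_def)
    then have ww: "last ys = z'" "last ys' = z" using ne by (auto simp: doubleton_eq_iff)
    then have "ys = ys' @ [z']" using L(3) L'(2) by simp
    moreover have "z \<in> set ys'" using ww(2) L'(1) by (metis last_in_set)
    ultimately show False using L(4) by simp
  qed
qed

lemma side_count: assumes g: "g \<in> E" and r: "r \<in> g"
  shows "card {z\<in>V. \<not> sep E g r z} - 1 \<le> card {f \<in> E - {g}. f \<subseteq> {z\<in>V. \<not> sep E g r z}}"
proof -
  let ?R = "{z\<in>V. \<not> sep E g r z}"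
  have rV: "r \<in> V" using eV[OF g] r by blast
  obtain x y where xy: "g = {x,y}" "x \<noteq> y" using e2[OF g] by (meson card_2_iff)
  obtain c where go: "g = {r, c}" "c \<noteq> r"
  proof (cases "r = x")
    case True then show ?thesis using that[of y] xy by auto
  next
    case False then have "r = y" using r xy by auto
    then show ?thesis using that[of x] xy by (auto simp: insert_commute)
  qed
  have sro: "sep E g r c" using sep_edge[of r c g] g go by simp
  have img: "lastedge r ` (?R - {r}) \<subseteq> {f \<in> E - {g}. f \<subseteq> ?R}"
  proof
    fix f assume "f \<in> lastedge r ` (?R - {r})"
    then obtain z where z: "z \<in> ?R" "z \<noteq> r" "f = lastedge r z" by blast
    have zV: "z \<in> V" using z by simp
    obtain ys where L: "ys \<noteq> []" "spath E r z = ys @ [z]" "spath E r (last ys) = ys"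
      "{last ys, z} \<in> path_edges (spath E r z)" "last ys \<in> V"
      using last_edge[OF rV zV z(2)] by blast
    have f: "f = {last ys, z}" using z(3) L(2) by (simp add: lastedge_def)
    have fE: "f \<in> E" using L(4) sp_E[OF rV zV] f by auto
    have ng: "g \<notin> path_edges (spath E r z)" using z(1) by (simp add: sep_def)
    have "f \<noteq> g"
    proof
      assume "f = g"
      then have "z \<in> g" using f by blast
      then have "z = c" using go z(2) by simp
      then show False using z(1) sro by simp
    qed
    moreover have "path_edges ys \<subseteq> path_edges (spath E r z)"
      using L(2) pe_append[of ys "[z]"] by simp
    then have "\<not> sep E g r (last ys)" using ng L(3) by (auto simp: sep_def)
    then have "f \<subseteq> ?R" using z(1) L(5) unfolding f by auto
    ultimately show "f \<in> {f \<in> E - {g}. f \<subseteq> ?R}" using fE by simp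
  qed
  have "inj_on (lastedge r) (?R - {r})" using lastedge_inj[OF rV] by (rule inj_on_subset) auto
  then have "card (?R - {r}) \<le> card {f \<in> E - {g}. f \<subseteq> ?R}"
    using img finE by (intro card_inj_on_le) auto
  moreover have "r \<in> ?R" using rV by simp
  ultimately show ?thesis by (simp add: card_Diff_singleton)
qed

end



lemma card3_eq: assumes "card T = 3" "a \<in> T" "b \<in> T" "c \<in> T" "a \<noteq> b" "a \<noteq> c" "b \<noteq> c"
  shows "T = {a,b,c}"
proof -
  have "finite T" using assms(1) by (metis card.infinite zero_neq_numeral)
  moreover have "{a,b,c} \<subseteq> T" using assms by auto
  moreover have "card {a,b,c} = card T" using assms by simp
  ultimately show ?thesis by (metis card_subset_eq)
qed

context tree begin

lemma edge_nonempty: "e \<in> E \<Longrightarrow> e \<noteq> {}" using e2 by fastforce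

definition cutprop :: "'a set \<Rightarrow> 'a set \<Rightarrow> bool" where
  "cutprop g A \<longleftrightarrow> A \<subseteq> V \<and> (\<forall>x\<in>V. \<forall>y\<in>V. sep E g x y \<longleftrightarrow> (x \<in> A \<longleftrightarrow> y \<notin> A)) \<and>
     card {f\<in>E-{g}. f \<subseteq> A} = card A - 1 \<and> card {f\<in>E-{g}. f \<subseteq> V - A} = card (V - A) - 1
     \<and> 1 \<le> card A \<and> 1 \<le> card (V - A)"

lemma cut_exists: assumes g: "g \<in> E" shows "\<exists>A. cutprop g A"
proof -
  obtain a b where ab: "g = {a,b}" "a \<noteq> b" using e2[OF g] by (meson card_2_iff)
  have aV: "a \<in> V" "b \<in> V" using eV[OF g] ab by auto
  define A where "A = {z\<in>V. \<not> sep E g a z}"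
  have sab: "sep E g a b" using sep_edge[of a b g] g ab by simp
  have AV: "A \<subseteq> V" by (auto simp: A_def)
  have sepA: "\<forall>x\<in>V. \<forall>y\<in>V. sep E g x y \<longleftrightarrow> (x \<in> A \<longleftrightarrow> y \<notin> A)"
  proof (intro ballI)
    fix x y assume x: "x \<in> V" and y: "y \<in> V"
    show "sep E g x y \<longleftrightarrow> (x \<in> A \<longleftrightarrow> y \<notin> A)" using sep_xor[OF g x y aV(1)] x y by (auto simp: A_def)
  qed
  have B: "{z\<in>V. \<not> sep E g b z} = V - A"
  proof (rule set_eqI)
    fix z show "z \<in> {z\<in>V. \<not> sep E g b z} \<longleftrightarrow> z \<in> V - A"
      using sep_xor[OF g aV(2) _ aV(1), of z] sab by (auto simp: A_def)
  qed
  let ?EA = "{f\<in>E-{g}. f \<subseteq> A}" and ?EB = "{f\<in>E-{g}. f \<subseteq> V - A}"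
  have un: "?EA \<union> ?EB = E - {g}"
  proof
    show "E - {g} \<subseteq> ?EA \<union> ?EB"
    proof
      fix f assume f: "f \<in> E - {g}"
      then have fV: "f \<subseteq> V" using eV by blast
      have "\<forall>p\<in>f. \<forall>q\<in>f. \<not> sep E g p q" using sameside[OF g] f by blast
      then have "\<forall>p\<in>f. \<forall>q\<in>f. (p \<in> A \<longleftrightarrow> q \<in> A)" using sepA fV by blast
      then have "f \<subseteq> A \<or> f \<subseteq> V - A" using fV by blast
      then show "f \<in> ?EA \<union> ?EB" using f by blast
    qed
  qed blast
  have dis: "?EA \<inter> ?EB = {}" using edge_nonempty by blast
  have fin: "finite ?EA" "finite ?EB" using finE by auto
  have "card ?EA + card ?EB = card (E - {g})" using card_Un_disjoint[OF fin dis] un by simp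
  also have "\<dots> = card V - 2" using g cE by (simp add: card_Diff_singleton)
  finally have s1: "card ?EA + card ?EB = card V - 2" .
  have c1: "card A - 1 \<le> card ?EA" using side_count[OF g, of a] ab by (simp add: A_def)
  have c2: "card (V - A) - 1 \<le> card ?EB" using side_count[OF g, of b] ab B by simp
  have "card A + card (V - A) = card V" using AV finV by (metis card_Diff_subset card_mono diff_add_inverse2
       le_add_diff_inverse rev_finite_subset add.commute)
  moreover have "a \<in> A" using aV by (simp add: A_def)
  moreover have "b \<in> V - A" using aV sab by (simp add: A_def)
  moreover have "finite A" using AV finV by (rule finite_subset)
  moreover have "finite (V - A)" using finV by simp
  ultimately have p: "1 \<le> card A" "1 \<le> card (V - A)"
    by (metis One_nat_def Suc_leI card_gt_0_iff empty_iff)+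
  have "card ?EA = card A - 1" "card ?EB = card (V - A) - 1"
    using s1 c1 c2 p \<open>card A + card (V - A) = card V\<close> by linarith+
  then show ?thesis unfolding cutprop_def using AV sepA p by blast
qed

definition cutA :: "'a set \<Rightarrow> 'a set" where "cutA g = (SOME A. cutprop g A)"

lemma cutA: "g \<in> E \<Longrightarrow> cutprop g (cutA g)"
  unfolding cutA_def using cut_exists by (metis someI_ex)

definition mid :: "'a set \<Rightarrow> 'a set set \<Rightarrow> bool" where
  "mid g T \<longleftrightarrow> g \<in> T \<and> T \<subseteq> E \<and> card T = 3 \<and>
     (\<exists>f\<in>T. \<exists>h\<in>T. f \<noteq> g \<and> h \<noteq> g \<and> (\<forall>p\<in>f. \<forall>q\<in>h. sep E g p q))"

lemma pair_count: assumes g: "g \<in> E"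
  shows "card {(x,y). x \<in> V \<and> y \<in> V \<and> sep E g x y} = 2 * (card (cutA g) * card (V - cutA g))"
proof -
  let ?A = "cutA g"
  have c: "cutprop g ?A" using cutA[OF g] .
  have AV: "?A \<subseteq> V" using c by (simp add: cutprop_def)
  have sepA: "\<forall>x\<in>V. \<forall>y\<in>V. sep E g x y \<longleftrightarrow> (x \<in> ?A \<longleftrightarrow> y \<notin> ?A)" using c by (simp add: cutprop_def)
  have eq: "{(x,y). x \<in> V \<and> y \<in> V \<and> sep E g x y} = ?A \<times> (V - ?A) \<union> (V - ?A) \<times> ?A"
    using sepA AV by auto
  have fA: "finite ?A" using AV finV by (rule finite_subset)
  have "card (?A \<times> (V - ?A) \<union> (V - ?A) \<times> ?A) = card (?A \<times> (V - ?A)) + card ((V - ?A) \<times> ?A)"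
    by (rule card_Un_disjoint) (use fA finV in auto)
  also have "\<dots> = 2 * (card ?A * card (V - ?A))" by (simp add: card_cartesian_product)
  finally show ?thesis using eq by simp
qed

lemma mid_count: assumes g: "g \<in> E"
  shows "card {T. mid g T} = (card (cutA g) - 1) * (card (V - cutA g) - 1)"
proof -
  let ?A = "cutA g"
  have c: "cutprop g ?A" using cutA[OF g] .
  have AV: "?A \<subseteq> V" using c by (simp add: cutprop_def)
  have sepA: "\<forall>x\<in>V. \<forall>y\<in>V. sep E g x y \<longleftrightarrow> (x \<in> ?A \<longleftrightarrow> y \<notin> ?A)" using c by (simp add: cutprop_def)
  let ?EA = "{f\<in>E-{g}. f \<subseteq> ?A}" and ?EB = "{f\<in>E-{g}. f \<subseteq> V - ?A}"
  have cA: "card ?EA = card ?A - 1" "card ?EB = card (V - ?A) - 1" using c by (simp_all add: cutprop_def)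
  have side: "f \<in> ?EA \<or> f \<in> ?EB" if f: "f \<in> E - {g}" for f
  proof -
    have fV: "f \<subseteq> V" using eV f by blast
    have "\<forall>p\<in>f. \<forall>q\<in>f. \<not> sep E g p q" using sameside[OF g] f by blast
    then have "\<forall>p\<in>f. \<forall>q\<in>f. (p \<in> ?A \<longleftrightarrow> q \<in> ?A)" using sepA fV by blast
    then have "f \<subseteq> ?A \<or> f \<subseteq> V - ?A" using fV by blast
    then show ?thesis using f by blast
  qed
  let ?m = "\<lambda>(f,h). {f,g,h}"
  have eq: "{T. mid g T} = ?m ` (?EA \<times> ?EB)"
  proof (rule set_eqI, rule iffI)
    fix T assume "T \<in> {T. mid g T}"
    then have m: "g \<in> T" "T \<subseteq> E" "card T = 3" and "\<exists>f\<in>T. \<exists>h\<in>T. f \<noteq> g \<and> h \<noteq> g \<and> (\<forall>p\<in>f. \<forall>q\<in>h. sep E g p q)"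
      by (auto simp: mid_def)
    then obtain f h where fh: "f \<in> T" "h \<in> T" "f \<noteq> g" "h \<noteq> g" "\<forall>p\<in>f. \<forall>q\<in>h. sep E g p q" by blast
    have fE: "f \<in> E - {g}" "h \<in> E - {g}" using fh m by auto
    obtain p where p: "p \<in> f" using edge_nonempty fE by blast
    obtain q where q: "q \<in> h" using edge_nonempty fE by blast
    have pV: "p \<in> V" "q \<in> V" using p q fE eV by auto
    have spq: "sep E g p q" using fh(5) p q by blast
    have "f \<noteq> h"
    proof
      assume "f = h" then have "sep E g p p" using fh(5) p by blast
      then show False by simp
    qed
    then have T: "T = {f,g,h}" using card3_eq[OF m(3) fh(1) m(1) fh(2)] fh(3,4) by auto
    have pq: "p \<in> ?A \<longleftrightarrow> q \<notin> ?A" using sepA pV spq by blast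
    show "T \<in> ?m ` (?EA \<times> ?EB)"
    proof (cases "f \<in> ?EA")
      case True
      then have "p \<in> ?A" using p by blast
      then have "h \<notin> ?EA" using pq q by blast
      then have "h \<in> ?EB" using side[OF fE(2)] by blast
      then show ?thesis using True T by force
    next
      case False
      then have fB: "f \<in> ?EB" using side[OF fE(1)] by blast
      then have "p \<notin> ?A" using p by blast
      then have "h \<notin> ?EB" using pq q by blast
      then have "h \<in> ?EA" using side[OF fE(2)] by blast
      moreover have "T = {h,g,f}" using T by auto
      ultimately show ?thesis using fB by force
    qed
  next
    fix T assume "T \<in> ?m ` (?EA \<times> ?EB)"
    then obtain f h where fh: "f \<in> ?EA" "h \<in> ?EB" "T = {f,g,h}" by blast
    have ne: "f \<noteq> {}" "h \<noteq> {}" using fh edge_nonempty by auto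
    have "f \<noteq> h" using fh ne by blast
    moreover have "f \<noteq> g" "h \<noteq> g" using fh by auto
    ultimately have "card T = 3" using fh(3) by auto
    moreover have "T \<subseteq> E" using fh g by auto
    moreover have "\<forall>p\<in>f. \<forall>q\<in>h. sep E g p q"
    proof (intro ballI)
      fix p q assume "p \<in> f" "q \<in> h"
      then have "p \<in> ?A" "q \<in> V - ?A" using fh by auto
      then show "sep E g p q" using sepA AV by auto
    qed
    ultimately show "T \<in> {T. mid g T}" unfolding mid_def using fh \<open>f \<noteq> g\<close> \<open>h \<noteq> g\<close> by auto
  qed
  have inj: "inj_on ?m (?EA \<times> ?EB)"
  proof (rule inj_onI)
    fix x y assume x: "x \<in> ?EA \<times> ?EB" and y: "y \<in> ?EA \<times> ?EB" and e: "?m x = ?m y"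
    obtain f h where xf: "x = (f,h)" by (cases x)
    obtain f' h' where yf: "y = (f',h')" by (cases y)
    have m: "f \<in> ?EA" "h \<in> ?EB" "f' \<in> ?EA" "h' \<in> ?EB" using x y xf yf by auto
    have ne: "f \<noteq> {}" "h \<noteq> {}" "f' \<noteq> {}" "h' \<noteq> {}" using m edge_nonempty by auto
    have e': "{f,g,h} = {f',g,h'}" using e xf yf by simp
    have "f \<noteq> h'" "f' \<noteq> h" using m ne by blast+
    moreover have "f \<noteq> g" "h \<noteq> g" "f' \<noteq> g" "h' \<noteq> g" using m by auto
    ultimately have "f = f'" "h = h'" using e' by blast+
    then show "x = y" using xf yf by simp
  qed
  have "card {T. mid g T} = card (?EA \<times> ?EB)" using eq card_image[OF inj] by simp
  also have "\<dots> = card ?EA * card ?EB" by (simp add: card_cartesian_product)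
  finally show ?thesis using cA by simp
qed

end



definition ed :: "'a list \<Rightarrow> nat \<Rightarrow> 'a set" where "ed ps n = {ps ! n, ps ! Suc n}"

lemma sort3: assumes "(a::nat) \<noteq> b" "a \<noteq> c" "b \<noteq> c"
  shows "\<exists>i j k. i < j \<and> j < k \<and> {a,b,c} = {i,j,k}"
proof -
  consider "a<b" "b<c" | "a<c" "c<b" | "b<a" "a<c" | "b<c" "c<a" | "c<a" "a<b" | "c<b" "b<a"
    using assms by (metis linorder_neqE_nat)
  then show ?thesis
  proof cases
    case 1 then show ?thesis by blast
  next
    case 2 then show ?thesis by (rule_tac x=a in exI, rule_tac x=c in exI, rule_tac x=b in exI) auto
  next
    case 3 then show ?thesis by (rule_tac x=b in exI, rule_tac x=a in exI, rule_tac x=c in exI) auto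
  next
    case 4 then show ?thesis by (rule_tac x=b in exI, rule_tac x=c in exI, rule_tac x=a in exI) auto
  next
    case 5 then show ?thesis by (rule_tac x=c in exI, rule_tac x=a in exI, rule_tac x=b in exI) auto
  next
    case 6 then show ?thesis by (rule_tac x=c in exI, rule_tac x=b in exI, rule_tac x=a in exI) auto
  qed
qed

lemma pe_ed: "e \<in> path_edges ps \<longleftrightarrow> (\<exists>n. Suc n < length ps \<and> e = ed ps n)"
  by (auto simp: path_edges_def ed_def)

lemma ed_inj: "distinct ps \<Longrightarrow> Suc n < length ps \<Longrightarrow> Suc m < length ps \<Longrightarrow> ed ps n = ed ps m \<longleftrightarrow> n = m"
  using edge_inj unfolding ed_def by metis

context tree begin

lemma ps_V: assumes "simple_path E ps" "Suc k < length ps" "m < length ps" shows "ps ! m \<in> V"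
  using simple_set[OF assms(1)] assms(2,3) by (simp add: subset_iff)

lemma ed_E: assumes "simple_path E ps" "Suc n < length ps" shows "ed ps n \<in> E"
  using assms pe_ed[of "ed ps n" ps] by (auto simp: simple_path_def walk_iff)

lemma sep_pt: assumes sp: "simple_path E ps" and n: "Suc n < length ps" and n': "Suc n' < length ps"
  and ne: "n \<noteq> n'" and p: "p \<in> ed ps n'"
  shows "sep E (ed ps n) (hd ps) p \<longleftrightarrow> n < n'"
proof -
  have "p = ps ! n' \<or> p = ps ! Suc n'" using p by (simp add: ed_def)
  then show ?thesis
  proof
    assume "p = ps ! n'" then show ?thesis using pos[OF sp n, of n'] n' by (simp add: ed_def)
  next
    assume "p = ps ! Suc n'" then show ?thesis using pos[OF sp n, of "Suc n'"] n' ne by (auto simp: ed_def)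
  qed
qed

lemma sep_between: assumes sp: "simple_path E ps" and n: "Suc n < length ps" and n1: "Suc n1 < length ps"
  and n2: "Suc n2 < length ps" and ne: "n \<noteq> n1" "n \<noteq> n2" and p: "p \<in> ed ps n1" and q: "q \<in> ed ps n2"
  shows "sep E (ed ps n) p q \<longleftrightarrow> ((n < n1) \<noteq> (n < n2))"
proof -
  have ne0: "ps \<noteq> []" using n by auto
  have V0: "hd ps \<in> V" using ps_V[OF sp n, of 0] ne0 by (simp add: hd_conv_nth)
  have pV: "p \<in> V"
  proof -
    have "p = ps ! n1 \<or> p = ps ! Suc n1" using p by (simp add: ed_def)
    then show ?thesis using ps_V[OF sp n, of n1] ps_V[OF sp n, of "Suc n1"] n1 by auto
  qed
  have qV: "q \<in> V"
  proof -
    have "q = ps ! n2 \<or> q = ps ! Suc n2" using q by (simp add: ed_def)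
    then show ?thesis using ps_V[OF sp n, of n2] ps_V[OF sp n, of "Suc n2"] n2 by auto
  qed
  note V = V0 pV qV
  have "sep E (ed ps n) p q \<longleftrightarrow> (sep E (ed ps n) (hd ps) p \<noteq> sep E (ed ps n) (hd ps) q)"
    using sep_xor[OF ed_E[OF sp n] V(2,3,1)] .
  then show ?thesis using sep_pt[OF sp n n1 ne(1) p] sep_pt[OF sp n n2 ne(2) q] by simp
qed

definition config :: "'a list \<Rightarrow> nat \<Rightarrow> nat \<Rightarrow> nat \<Rightarrow> bool" where
  "config ps i j k \<longleftrightarrow> simple_path E ps \<and> i < j \<and> j < k \<and> Suc k < length ps"

lemma Tr_config: assumes "T \<in> triples_on_path E"
  shows "\<exists>ps i j k. config ps i j k \<and> T = {ed ps i, ed ps j, ed ps k}"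
proof -
  obtain ps where T: "T \<subseteq> E" "card T = 3" "simple_path E ps" "T \<subseteq> path_edges ps"
    using assms by (auto simp: triples_on_path_def)
  have d: "distinct ps" using T(3) by (simp add: simple_path_def)
  have "\<exists>x y z. T = {x,y,z} \<and> x \<noteq> y \<and> y \<noteq> z \<and> x \<noteq> z" using T(2) by (simp only: card_3_iff)
  then obtain e1 e2 e3 where e: "T = {e1,e2,e3}" "e1 \<noteq> e2" "e2 \<noteq> e3" "e1 \<noteq> e3" by blast
  have "e1 \<in> path_edges ps" "e2 \<in> path_edges ps" "e3 \<in> path_edges ps" using T(4) e(1) by auto
  then have "\<exists>n. Suc n < length ps \<and> e1 = ed ps n" "\<exists>n. Suc n < length ps \<and> e2 = ed ps n"
    "\<exists>n. Suc n < length ps \<and> e3 = ed ps n" by (simp_all only: pe_ed)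
  then obtain n1 n2 n3 where n1: "Suc n1 < length ps" "e1 = ed ps n1" and n2: "Suc n2 < length ps" "e2 = ed ps n2"
    and n3: "Suc n3 < length ps" "e3 = ed ps n3" by blast
  have "n1 \<noteq> n2" "n1 \<noteq> n3" "n2 \<noteq> n3" using e(2-4) n1(2) n2(2) n3(2) by auto
  then have "\<exists>i j k. i < j \<and> j < k \<and> {n1,n2,n3} = {i,j,k}" by (intro sort3)
  then obtain i j k where ijk: "i < j" "j < k" "{n1,n2,n3} = {i,j,k}" by meson
  have "T = ed ps ` {n1,n2,n3}" using e(1) n1(2) n2(2) n3(2) by simp
  then have "T = {ed ps i, ed ps j, ed ps k}" by (simp only: ijk(3) image_insert image_empty)
  moreover have "k \<in> {i,j,k}" by simp
  then have "k \<in> {n1,n2,n3}" by (simp only: ijk(3))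
  then have "Suc k < length ps" using n1(1) n2(1) n3(1) by blast
  ultimately show ?thesis using T(3) ijk unfolding config_def by blast
qed

lemma config_basic: assumes c: "config ps i j k"
  shows "ed ps i \<noteq> ed ps j" "ed ps i \<noteq> ed ps k" "ed ps j \<noteq> ed ps k"
    "card {ed ps i, ed ps j, ed ps k} = 3" "{ed ps i, ed ps j, ed ps k} \<subseteq> E"
proof -
  have sp: "simple_path E ps" and ijk: "i < j" "j < k" "Suc k < length ps" using c by (auto simp: config_def)
  have d: "distinct ps" using sp by (simp add: simple_path_def)
  show "ed ps i \<noteq> ed ps j" "ed ps i \<noteq> ed ps k" "ed ps j \<noteq> ed ps k"
    using ed_inj[OF d] ijk by auto
  then show "card {ed ps i, ed ps j, ed ps k} = 3" by simp
  show "{ed ps i, ed ps j, ed ps k} \<subseteq> E" using ed_E[OF sp] ijk by auto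
qed

lemma config_mid: assumes c: "config ps i j k" and T: "T = {ed ps i, ed ps j, ed ps k}"
  shows "mid e T \<longleftrightarrow> e = ed ps j"
proof -
  have sp: "simple_path E ps" and ijk: "i < j" "j < k" "Suc k < length ps" using c by (auto simp: config_def)
  note b = config_basic[OF c]
  have L: "\<And>n. n \<in> {i,j,k} \<Longrightarrow> Suc n < length ps" using ijk by auto
  show ?thesis
  proof
    assume m: "mid e T"
    then have eT: "e \<in> T" by (simp add: mid_def)
    obtain f h where fh: "f \<in> T" "h \<in> T" "f \<noteq> e" "h \<noteq> e" "\<forall>p\<in>f. \<forall>q\<in>h. sep E e p q"
      using m by (auto simp: mid_def)
    obtain n0 where n0: "n0 \<in> {i,j,k}" "e = ed ps n0" using eT T by auto
    obtain n1 where n1: "n1 \<in> {i,j,k}" "f = ed ps n1" using fh T by auto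
    obtain n2 where n2: "n2 \<in> {i,j,k}" "h = ed ps n2" using fh T by auto
    have ne: "n0 \<noteq> n1" "n0 \<noteq> n2" using fh n0 n1 n2 by auto
    have "ps ! n1 \<in> f" "ps ! n2 \<in> h" using n1 n2 by (auto simp: ed_def)
    then have "sep E e (ps ! n1) (ps ! n2)" using fh by blast
    then have "(n0 < n1) \<noteq> (n0 < n2)"
      using sep_between[OF sp L[OF n0(1)] L[OF n1(1)] L[OF n2(1)] ne] n0 n1 n2
      by (auto simp: ed_def)
    then have "n0 = j" using n0 n1 n2 ne ijk by auto
    then show "e = ed ps j" using n0 by simp
  next
    assume e: "e = ed ps j"
    have "\<forall>p\<in>ed ps i. \<forall>q\<in>ed ps k. sep E (ed ps j) p q"
      using sep_between[OF sp L L L, of j i k] ijk by auto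
    then show "mid e T" unfolding mid_def using e T b by auto
  qed
qed

lemma mid_Tr: assumes g: "g \<in> E" and m: "mid g T" shows "T \<in> triples_on_path E"
proof -
  obtain f h where fh: "f \<in> T" "h \<in> T" "f \<noteq> g" "h \<noteq> g" "\<forall>p\<in>f. \<forall>q\<in>h. sep E g p q"
    and T: "g \<in> T" "T \<subseteq> E" "card T = 3" using m by (auto simp: mid_def)
  have fE: "f \<in> E" "h \<in> E" using fh T by auto
  have fV: "f \<subseteq> V" "h \<subseteq> V" using fE eV by auto
  have fh_ne: "f \<noteq> h"
  proof
    assume "f = h"
    obtain p where "p \<in> f" using edge_nonempty fE by blast
    then have "sep E g p p" using fh(5) \<open>f = h\<close> by blast
    then show False by simp
  qed
  have Teq: "T = {f,g,h}" using card3_eq[OF T(3) fh(1) T(1) fh(2)] fh(3,4) fh_ne by auto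
  obtain y0 where y0: "y0 \<in> h" using edge_nonempty fE by blast
  obtain p0 q0 where pq0: "f = {p0,q0}" "p0 \<noteq> q0" using e2[OF fE(1)] by (meson card_2_iff)
  have sf: "sep E f p0 q0" using sep_edge[of p0 q0 f] fE pq0 by simp
  have pqV: "p0 \<in> V" "q0 \<in> V" "y0 \<in> V" using fV pq0 y0 by auto
  have "sep E f p0 q0 \<longleftrightarrow> (sep E f y0 p0 \<noteq> sep E f y0 q0)" by (rule sep_xor[OF fE(1) pqV])
  then obtain x where x: "x \<in> f" "sep E f y0 x" using sf pq0 by auto
  have xV: "x \<in> V" using x fV by auto
  obtain r0 s0 where rs0: "h = {r0,s0}" "r0 \<noteq> s0" using e2[OF fE(2)] by (meson card_2_iff)
  have sh: "sep E h r0 s0" using sep_edge[of r0 s0 h] fE rs0 by simp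
  have rsV: "r0 \<in> V" "s0 \<in> V" using fV rs0 by auto
  have "sep E h r0 s0 \<longleftrightarrow> (sep E h x r0 \<noteq> sep E h x s0)" by (rule sep_xor[OF fE(2) rsV xV])
  then obtain y where y: "y \<in> h" "sep E h x y" using sh rs0 by auto
  have yV: "y \<in> V" using y fV by auto
  have "sep E f x y \<longleftrightarrow> (sep E f y0 x \<noteq> sep E f y0 y)" by (rule sep_xor[OF fE(1) xV yV pqV(3)])
  moreover have "\<not> sep E f y0 y" using sameside[OF fE(1) fE(2)] fh_ne y0 y by auto
  ultimately have sfxy: "sep E f x y" using x by simp
  have sgxy: "sep E g x y" using fh(5) x y by blast
  have "T \<subseteq> path_edges (spath E x y)" using Teq sfxy sgxy y by (auto simp: sep_def)
  moreover have "simple_path E (spath E x y)" using sp[OF xV yV] by simp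
  ultimately show ?thesis unfolding triples_on_path_def using T by blast
qed

lemma Tr_union: "triples_on_path E = (\<Union>g\<in>E. {T. mid g T})"
proof
  show "triples_on_path E \<subseteq> (\<Union>g\<in>E. {T. mid g T})"
  proof
    fix T assume "T \<in> triples_on_path E"
    then obtain ps i j k where c: "config ps i j k" "T = {ed ps i, ed ps j, ed ps k}" using Tr_config by blast
    then have "mid (ed ps j) T" using config_mid by blast
    moreover have "ed ps j \<in> E" using config_basic(5)[OF c(1)] by simp
    ultimately show "T \<in> (\<Union>g\<in>E. {T. mid g T})" by blast
  qed
  show "(\<Union>g\<in>E. {T. mid g T}) \<subseteq> triples_on_path E" using mid_Tr by blast
qed

lemma card_Tr: "card (triples_on_path E) = (\<Sum>g\<in>E. card {T. mid g T})"
proof -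
  have fin: "\<forall>g\<in>E. finite {T. mid g T}"
  proof
    fix g assume "g \<in> E"
    have "{T. mid g T} \<subseteq> Pow E" by (auto simp: mid_def)
    then show "finite {T. mid g T}" using finE by (meson finite_Pow_iff finite_subset)
  qed
  have dis: "\<forall>g\<in>E. \<forall>g'\<in>E. g \<noteq> g' \<longrightarrow> {T. mid g T} \<inter> {T. mid g' T} = {}"
  proof (intro ballI impI)
    fix g g' assume g: "g \<in> E" "g' \<in> E" "g \<noteq> g'"
    show "{T. mid g T} \<inter> {T. mid g' T} = {}"
    proof (rule ccontr)
      assume "\<not> ?thesis"
      then obtain T where m: "mid g T" "mid g' T" by blast
      then have "T \<in> triples_on_path E" using mid_Tr g by blast
      then obtain ps i j k where c: "config ps i j k" "T = {ed ps i, ed ps j, ed ps k}" using Tr_config by blast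
      then have "g = ed ps j" "g' = ed ps j" using config_mid m by blast+
      then show False using g by simp
    qed
  qed
  show ?thesis unfolding Tr_union using card_UN_disjoint[OF finE fin dis] by simp
qed

end



lemma rtrancl_conn1: "(x,y) \<in> {(a,b). {a,b} \<in> S}\<^sup>* \<Longrightarrow> conn S x y"
proof (induction rule: rtrancl_induct)
  case base then show ?case by (rule conn_refl)
next
  case (step y z)
  from step.hyps(2) have "{y,z} \<in> S" by simp
  then show ?case by (rule conn_snoc[OF step.IH])
qed

lemma rtrancl_conn2: "ps \<noteq> [] \<Longrightarrow> path_edges ps \<subseteq> S \<Longrightarrow> (hd ps, last ps) \<in> {(a,b). {a,b} \<in> S}\<^sup>*"
proof (induction ps)
  case (Cons a ps)
  show ?case
  proof (cases "ps = []")
    case False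
    have e: "(a, hd ps) \<in> {(a,b). {a,b} \<in> S}" using Cons.prems(2) False by (simp add: pe_Cons)
    have "path_edges ps \<subseteq> S" using pe_Cons_sub[of ps a] Cons.prems(2) by (rule subset_trans)
    then have r: "(hd ps, last ps) \<in> {(a,b). {a,b} \<in> S}\<^sup>*" using Cons.IH[OF False] by simp
    have "(a, last ps) \<in> {(a,b). {a,b} \<in> S}\<^sup>*" by (rule converse_rtrancl_into_rtrancl[OF e r])
    then show ?thesis using False by simp
  qed simp
qed simp

lemma rtrancl_conn: "(x,y) \<in> {(a,b). {a,b} \<in> S}\<^sup>* \<longleftrightarrow> conn S x y"
proof
  assume "conn S x y"
  then obtain ps where ps: "ps \<noteq> []" "hd ps = x" "last ps = y" "path_edges ps \<subseteq> S" unfolding conn_def by blast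
  show "(x,y) \<in> {(a,b). {a,b} \<in> S}\<^sup>*" using rtrancl_conn2[OF ps(1,4)] ps(2,3) by simp
qed (rule rtrancl_conn1)

context tree begin

lemma class_eq: assumes z: "z \<in> V"
  shows "contr_class V (E - T) z = {w\<in>V. \<forall>e\<in>T. \<not> sep E e z w}"
proof (rule set_eqI)
  fix w
  show "w \<in> contr_class V (E - T) z \<longleftrightarrow> w \<in> {w\<in>V. \<forall>e\<in>T. \<not> sep E e z w}"
  proof (cases "w \<in> V")
    case True
    then show ?thesis unfolding contr_class_def mem_Collect_eq rtrancl_conn using conn_iff[OF z True] by simp
  qed (simp add: contr_class_def)
qed

lemma class_same: assumes T: "T \<subseteq> E" and z: "z \<in> V" "z' \<in> V"
  shows "contr_class V (E - T) z = contr_class V (E - T) z' \<longleftrightarrow> (\<forall>e\<in>T. \<not> sep E e z z')"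
proof
  assume eq: "contr_class V (E - T) z = contr_class V (E - T) z'"
  have "z' \<in> contr_class V (E - T) z'" using class_eq[OF z(2), of T] z(2) by simp
  then have "z' \<in> contr_class V (E - T) z" using eq by simp
  then show "\<forall>e\<in>T. \<not> sep E e z z'" using class_eq[OF z(1), of T] by simp
next
  assume a: "\<forall>e\<in>T. \<not> sep E e z z'"
  have "\<forall>e\<in>T. \<forall>w\<in>V. sep E e z' w \<longleftrightarrow> sep E e z w"
  proof (intro ballI)
    fix e w assume e: "e \<in> T" and w: "w \<in> V"
    have "sep E e z' w \<longleftrightarrow> (sep E e z z' \<noteq> sep E e z w)" using sep_xor[OF _ z(2) w z(1)] e T by blast
    then show "sep E e z' w \<longleftrightarrow> sep E e z w" using a e by simp
  qed
  then show "contr_class V (E - T) z = contr_class V (E - T) z'"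
    unfolding class_eq[OF z(1)] class_eq[OF z(2)] by blast
qed

lemma down: assumes c: "config ps i j k" and n: "n1 < n2" "Suc n2 < length ps" and z: "z \<in> V"
  and s: "sep E (ed ps n2) (hd ps) z" shows "sep E (ed ps n1) (hd ps) z"
proof -
  have sp: "simple_path E ps" using c by (simp add: config_def)
  have xV: "hd ps \<in> V" using ps_V[OF sp n(2), of 0] n by (cases ps) auto
  have "ed ps n2 \<subseteq> set (spath E (hd ps) z)" using s pe_subset_set by (auto simp: sep_def)
  then have "ps ! n2 \<in> set (spath E (hd ps) z)" by (simp add: ed_def)
  then have sub: "path_edges (spath E (hd ps) (ps ! n2)) \<subseteq> path_edges (spath E (hd ps) z)"
    using subpath[OF xV z] by blast
  have "ps ! n2 \<in> ed ps n2" by (simp add: ed_def)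
  then have "sep E (ed ps n1) (hd ps) (ps ! n2)" using sep_pt[OF sp _ n(2), of n1] n by simp
  then show ?thesis using sub by (auto simp: sep_def)
qed

lemma config_contracts: assumes c: "config ps i j k" and T: "T = {ed ps i, ed ps j, ed ps k}"
  shows "contracts_to_P4 V E (E - T)"
proof -
  have sp: "simple_path E ps" and ijk: "i < j" "j < k" "Suc k < length ps" using c by (auto simp: config_def)
  note b = config_basic[OF c]
  have TE: "T \<subseteq> E" using b T by simp
  let ?x = "hd ps"
  have xV: "?x \<in> V" using ps_V[OF sp ijk(3), of 0] ijk by (cases ps) auto
  let ?cl = "contr_class V (E - T)"
  define S where "S z = {e\<in>T. sep E e ?x z}" for z
  define F where "F C = card {e\<in>T. \<exists>w\<in>C. sep E e ?x w}" for C
  have FS: "F (?cl z) = card (S z)" if z: "z \<in> V" for z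
  proof -
    have "{e\<in>T. \<exists>w\<in>?cl z. sep E e ?x w} = S z"
    proof (rule set_eqI, rule iffI)
      fix e assume "e \<in> {e\<in>T. \<exists>w\<in>?cl z. sep E e ?x w}"
      then obtain w where e: "e \<in> T" "w \<in> ?cl z" "sep E e ?x w" by blast
      then have wV: "w \<in> V" "\<not> sep E e z w" using class_eq[OF z] by auto
      have "sep E e ?x w \<longleftrightarrow> (sep E e z ?x \<noteq> sep E e z w)" using sep_xor[OF _ xV wV(1) z] e TE by blast
      then have "sep E e ?x z" using e(3) wV sep_sym[OF z xV] by simp
      then show "e \<in> S z" using e by (simp add: S_def)
    next
      fix e assume "e \<in> S z"
      moreover have "z \<in> ?cl z" using class_eq[OF z] z by simp
      ultimately show "e \<in> {e\<in>T. \<exists>w\<in>?cl z. sep E e ?x w}" by (auto simp: S_def)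
    qed
    then show ?thesis by (simp add: F_def)
  qed
  have L: "\<And>n. n \<in> {i,j,k} \<Longrightarrow> Suc n < length ps" using ijk by auto
  have Sopts: "S z = {} \<or> S z = {ed ps i} \<or> S z = {ed ps i, ed ps j} \<or> S z = T" if z: "z \<in> V" for z
  proof -
    have dk: "sep E (ed ps k) ?x z \<Longrightarrow> sep E (ed ps j) ?x z" using down[OF c ijk(2) ijk(3) z] by blast
    have dj: "sep E (ed ps j) ?x z \<Longrightarrow> sep E (ed ps i) ?x z" using down[OF c ijk(1) _ z] ijk by simp
    consider "\<not> sep E (ed ps i) ?x z" "\<not> sep E (ed ps j) ?x z" "\<not> sep E (ed ps k) ?x z"
      | "sep E (ed ps i) ?x z" "\<not> sep E (ed ps j) ?x z" "\<not> sep E (ed ps k) ?x z"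
      | "sep E (ed ps i) ?x z" "sep E (ed ps j) ?x z" "\<not> sep E (ed ps k) ?x z"
      | "sep E (ed ps i) ?x z" "sep E (ed ps j) ?x z" "sep E (ed ps k) ?x z" using dk dj by blast
    then show ?thesis
    proof cases
      case 1 then have "S z = {}" unfolding S_def T by auto
      then show ?thesis by blast
    next
      case 2 then have "S z = {ed ps i}" unfolding S_def T by auto
      then show ?thesis by blast
    next
      case 3 then have "S z = {ed ps i, ed ps j}" unfolding S_def T by auto
      then show ?thesis by blast
    next
      case 4 then have "S z = T" unfolding S_def T by auto
      then show ?thesis by blast
    qed
  qed
  have c1: "card {ed ps i} = 1" by simp
  have c2: "card {ed ps i, ed ps j} = 2" using b by simp
  have c3: "card T = 3" using b T by simp
  have cardS: "S z = S z'" if z: "z \<in> V" "z' \<in> V" "card (S z) = card (S z')" for z z'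
    using Sopts[OF z(1)] Sopts[OF z(2)] z(3) c1 c2 c3 by (elim disjE) simp_all
  have clS: "?cl z = ?cl z' \<longleftrightarrow> S z = S z'" if z: "z \<in> V" "z' \<in> V" for z z'
  proof -
    have "\<forall>e\<in>T. sep E e z z' \<longleftrightarrow> (sep E e ?x z \<noteq> sep E e ?x z')" using sep_xor[OF _ z xV] TE by blast
    then have "(\<forall>e\<in>T. \<not> sep E e z z') \<longleftrightarrow> S z = S z'" unfolding S_def by blast
    then show ?thesis using class_same[OF TE z] by simp
  qed
  have Sm: "S (ps ! m) = {e. \<exists>n\<in>{i,j,k}. n < m \<and> e = ed ps n}" if m: "m < length ps" for m
  proof -
    have "\<And>n. n \<in> {i,j,k} \<Longrightarrow> sep E (ed ps n) ?x (ps ! m) \<longleftrightarrow> n < m"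
      using pos[OF sp _ m] L by (simp add: ed_def)
    then show ?thesis unfolding S_def T by auto
  qed
  have pV: "\<And>m. m < length ps \<Longrightarrow> ps ! m \<in> V" using ps_V[OF sp ijk(3)] by blast
  have "0 < length ps" using ijk(3) by linarith
  then have S0: "S (ps ! 0) = {}" using Sm[of 0] by simp
  have Si: "S (ps ! i) = {}" using Sm[of i] ijk by auto
  have Si1: "S (ps ! Suc i) = {ed ps i}" using Sm[of "Suc i"] ijk by auto
  have Sj: "S (ps ! j) = {ed ps i}" using Sm[of j] ijk by auto
  have Sj1: "S (ps ! Suc j) = {ed ps i, ed ps j}" using Sm[of "Suc j"] ijk by auto
  have Sk: "S (ps ! k) = {ed ps i, ed ps j}" using Sm[of k] ijk by auto
  have Sk1: "S (ps ! Suc k) = T" using Sm[of "Suc k"] ijk T by auto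
  have V0: "ps ! 0 \<in> V" "ps ! i \<in> V" "ps ! Suc i \<in> V" "ps ! j \<in> V" "ps ! Suc j \<in> V" "ps ! k \<in> V" "ps ! Suc k \<in> V"
    using pV ijk \<open>0 < length ps\<close> by auto
  have inj: "inj_on F (?cl ` V)"
  proof (rule inj_onI)
    fix C C' assume "C \<in> ?cl ` V" "C' \<in> ?cl ` V" and e: "F C = F C'"
    then obtain z z' where z: "z \<in> V" "z' \<in> V" "C = ?cl z" "C' = ?cl z'" by blast
    have "card (S z) = card (S z')" using e z FS by simp
    then have "S z = S z'" using cardS z by blast
    then show "C = C'" using clS[OF z(1,2)] z by simp
  qed
  have img: "F ` (?cl ` V) = {0..3}"
  proof
    show "F ` (?cl ` V) \<subseteq> {0..3}"
    proof
      fix n assume "n \<in> F ` (?cl ` V)"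
      then obtain z where z: "z \<in> V" "n = F (?cl z)" by blast
      have "S z \<subseteq> T" by (auto simp: S_def)
      then have "card (S z) \<le> 3" using c3 b T by (metis card_mono finite.emptyI finite.insertI)
      then show "n \<in> {0..3}" using FS[OF z(1)] z(2) by auto
    qed
    show "{0..3} \<subseteq> F ` (?cl ` V)"
    proof
      fix n :: nat assume "n \<in> {0..3}"
      then have "n = 0 \<or> n = 1 \<or> n = 2 \<or> n = 3" by auto
      have f0: "F (?cl (ps ! 0)) = 0" using FS[OF V0(1)] S0 by simp
      have f1: "F (?cl (ps ! Suc i)) = 1" using FS[OF V0(3)] Si1 by simp
      have f2: "F (?cl (ps ! Suc j)) = 2" using FS[OF V0(5)] Sj1 c2 by simp
      have f3: "F (?cl (ps ! Suc k)) = 3" using FS[OF V0(7)] Sk1 c3 by simp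
      have m: "?cl (ps ! 0) \<in> ?cl ` V" "?cl (ps ! Suc i) \<in> ?cl ` V" "?cl (ps ! Suc j) \<in> ?cl ` V"
        "?cl (ps ! Suc k) \<in> ?cl ` V" using V0 by auto
      have "0 \<in> F ` (?cl ` V)" "1 \<in> F ` (?cl ` V)" "2 \<in> F ` (?cl ` V)" "3 \<in> F ` (?cl ` V)"
        using rev_image_eqI[of _ _ _ F, OF m(1) f0[symmetric]] rev_image_eqI[of _ _ _ F, OF m(2) f1[symmetric]]
          rev_image_eqI[of _ _ _ F, OF m(3) f2[symmetric]] rev_image_eqI[of _ _ _ F, OF m(4) f3[symmetric]] by simp_all
      then show "n \<in> F ` (?cl ` V)" using \<open>n = 0 \<or> n = 1 \<or> n = 2 \<or> n = 3\<close> by blast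
    qed
  qed
  define Gm where "Gm e = F ` (?cl ` e)" for e
  have G: "Gm (ed ps n) = {F (?cl (ps ! n)), F (?cl (ps ! Suc n))}" for n
    by (simp add: ed_def Gm_def)
  have Gi: "Gm (ed ps i) = {0,1}" using G[of i] FS[OF V0(2)] FS[OF V0(3)] Si Si1 by simp
  have Gj: "Gm (ed ps j) = {1,2}" using G[of j] FS[OF V0(4)] FS[OF V0(5)] Sj Sj1 c2 by simp
  have Gk: "Gm (ed ps k) = {2,3}" using G[of k] FS[OF V0(6)] FS[OF V0(7)] Sk Sk1 c2 c3 by simp
  have ET: "E - (E - T) = T" using TE by blast
  have d: "{0::nat,1} \<noteq> {1,2}" "{0::nat,1} \<noteq> {2,3}" "{1::nat,2} \<noteq> {2,3}" by (auto simp: doubleton_eq_iff)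
  have bb1: "bij_betw Gm T P4_edges"
  proof (rule bij_betw_imageI)
    show "inj_on Gm T" unfolding T using Gi Gj Gk d b(1-3) by (simp add: inj_on_insert)
    show "Gm ` T = P4_edges" unfolding T P4_edges_def using Gi Gj Gk by simp
  qed
  have bb1': "bij_betw (\<lambda>e. F ` (?cl ` e)) T P4_edges"
  proof -
    have "Gm = (\<lambda>e. F ` (?cl ` e))" by (rule ext) (simp add: Gm_def)
    then show ?thesis using bb1 by simp
  qed
  have bb2: "bij_betw F (?cl ` V) {0..3}" using inj img by (simp add: bij_betw_def)
  show ?thesis unfolding contracts_to_P4_def ET by (rule exI[of _ F]) (use bb1' bb2 in blast)
qed

end



context tree begin

lemma nonmid_all: assumes TE: "T \<subseteq> E" and c3: "card T = 3" and nm: "\<not> mid e T" and eT: "e \<in> T"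
  and e1: "e1 \<in> T" "e1 \<noteq> e" and e2: "e2 \<in> T" "e2 \<noteq> e" and p: "p \<in> e1" and q: "q \<in> e2"
  shows "\<not> sep E e p q"
proof -
  have "\<not> (\<forall>p\<in>e1. \<forall>q\<in>e2. sep E e p q)" using nm eT TE c3 e1 e2 unfolding mid_def by blast
  then obtain p0 q0 where pq0: "p0 \<in> e1" "q0 \<in> e2" "\<not> sep E e p0 q0" by blast
  have eE: "e \<in> E" "e1 \<in> E" "e2 \<in> E" using TE eT e1 e2 by auto
  have V: "p \<in> V" "q \<in> V" "p0 \<in> V" "q0 \<in> V" using eV[OF eE(2)] eV[OF eE(3)] p q pq0 by auto
  have "sep E e p q \<longleftrightarrow> (sep E e p0 p \<noteq> sep E e p0 q)" by (rule sep_xor[OF eE(1) V(1,2,3)])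
  moreover have "\<not> sep E e p0 p" using sameside[OF eE(1) eE(2) e1(2) pq0(1) p] .
  moreover have "sep E e p0 q \<longleftrightarrow> (sep E e q0 p0 \<noteq> sep E e q0 q)" by (rule sep_xor[OF eE(1) V(3,2,4)])
  moreover have "\<not> sep E e q0 q" using sameside[OF eE(1) eE(3) e2(2) pq0(2) q] .
  moreover have "\<not> sep E e q0 p0" using pq0(3) sep_sym[OF V(3,4)] by simp
  ultimately show ?thesis by simp
qed

lemma contracts_Tr: assumes TE: "T \<subseteq> E" and c3: "card T = 3" and ct: "contracts_to_P4 V E (E - T)"
  shows "T \<in> triples_on_path E"
proof (rule ccontr)
  assume nT: "T \<notin> triples_on_path E"
  have nm: "\<not> mid e T" for e
  proof
    assume m: "mid e T"
    then have "e \<in> E" using TE by (auto simp: mid_def)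
    then show False using mid_Tr m nT by blast
  qed
  have zex: "\<exists>z\<in>e. \<forall>e'\<in>T-{e}. \<forall>w\<in>e'. \<not> sep E e z w" if eT: "e \<in> T" for e
  proof -
    have eE: "e \<in> E" using eT TE by auto
    have "card (T - {e}) = 2" using c3 eT by (simp add: card_Diff_singleton)
    then have "T - {e} \<noteq> {}" by (metis card.empty zero_neq_numeral)
    then obtain e1 where e1: "e1 \<in> T" "e1 \<noteq> e" by blast
    have e1E: "e1 \<in> E" using e1 TE by auto
    obtain w1 where w1: "w1 \<in> e1" using edge_nonempty[OF e1E] by blast
    have w1V: "w1 \<in> V" using eV[OF e1E] w1 by auto
    obtain p0 q0 where pq: "e = {p0,q0}" "p0 \<noteq> q0" using e2[OF eE] by (meson card_2_iff)
    have pqV: "p0 \<in> V" "q0 \<in> V" using eV[OF eE] pq by auto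
    have "sep E e p0 q0" using sep_edge[of p0 q0 e] eE pq by simp
    moreover have "sep E e p0 q0 \<longleftrightarrow> (sep E e w1 p0 \<noteq> sep E e w1 q0)" by (rule sep_xor[OF eE pqV w1V])
    ultimately obtain z where z: "z \<in> e" "\<not> sep E e w1 z" using pq by auto
    have zV: "z \<in> V" using eV[OF eE] z by auto
    have "\<forall>e'\<in>T-{e}. \<forall>w\<in>e'. \<not> sep E e z w"
    proof (intro ballI)
      fix e' w assume e': "e' \<in> T - {e}" and w: "w \<in> e'"
      have wV: "w \<in> V" using e' w TE eV by blast
      have "\<not> sep E e w1 w" using nonmid_all[OF TE c3 nm eT e1 _ _ w1 w] e' by blast
      moreover have "sep E e z w \<longleftrightarrow> (sep E e w1 z \<noteq> sep E e w1 w)" by (rule sep_xor[OF eE zV wV w1V])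
      ultimately show "\<not> sep E e z w" using z by simp
    qed
    then show ?thesis using z by blast
  qed
  define Z where "Z e = (SOME z. z \<in> e \<and> (\<forall>e'\<in>T-{e}. \<forall>w\<in>e'. \<not> sep E e z w))" for e
  have Z0: "Z e \<in> e \<and> (\<forall>e'\<in>T-{e}. \<forall>w\<in>e'. \<not> sep E e (Z e) w)" if "e \<in> T" for e
  proof -
    have "\<exists>z. z \<in> e \<and> (\<forall>e'\<in>T-{e}. \<forall>w\<in>e'. \<not> sep E e z w)" using zex[OF that] by blast
    then show ?thesis unfolding Z_def by (rule someI_ex)
  qed
  have Z: "Z e \<in> e" "\<forall>e'\<in>T-{e}. \<forall>w\<in>e'. \<not> sep E e (Z e) w" if "e \<in> T" for e
    using Z0[OF that] by blast+
  have ZV: "Z e \<in> V" if "e \<in> T" for e using Z(1)[OF that] that TE eV by blast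
  let ?cl = "contr_class V (E - T)"
  have same: "?cl (Z e) = ?cl (Z e')" if e: "e \<in> T" "e' \<in> T" for e e'
  proof -
    have "\<forall>d\<in>T. \<not> sep E d (Z e) (Z e')"
    proof
      fix d assume d: "d \<in> T"
      show "\<not> sep E d (Z e) (Z e')"
      proof (cases "e = e'")
        case True then show ?thesis by simp
      next
        case False
        show ?thesis
        proof (cases "d = e")
          case True then show ?thesis using Z(2)[OF e(1)] Z(1)[OF e(2)] e False by blast
        next
          case dne: False
          show ?thesis
          proof (cases "d = e'")
            case True
            then have "\<not> sep E d (Z e') (Z e)" using Z(2)[OF e(2)] Z(1)[OF e(1)] e False by blast
            then show ?thesis using sep_sym[OF ZV[OF e(1)] ZV[OF e(2)]] by simp
          next
            case dne': False
            have dE: "d \<in> E" using d TE by auto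
            have a1: "\<not> sep E d (Z d) (Z e)" using Z(2)[OF d] Z(1)[OF e(1)] e dne by blast
            have a2: "\<not> sep E d (Z d) (Z e')" using Z(2)[OF d] Z(1)[OF e(2)] e dne' by blast
            have "sep E d (Z e) (Z e') \<longleftrightarrow> (sep E d (Z d) (Z e) \<noteq> sep E d (Z d) (Z e'))"
              by (rule sep_xor[OF dE ZV[OF e(1)] ZV[OF e(2)] ZV[OF d]])
            then show ?thesis using a1 a2 by simp
          qed
        qed
      qed
    qed
    then show ?thesis using class_same[OF TE ZV[OF e(1)] ZV[OF e(2)]] by simp
  qed
  have ET: "E - (E - T) = T" using TE by blast
  obtain F where F: "bij_betw (\<lambda>e. F ` (?cl ` e)) T P4_edges" using ct unfolding contracts_to_P4_def ET by blast
  have "T \<noteq> {}" using c3 by (metis card.empty zero_neq_numeral)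
  then obtain e0 where e0: "e0 \<in> T" by blast
  let ?c = "F (?cl (Z e0))"
  have inall: "?c \<in> F ` (?cl ` e)" if "e \<in> T" for e
  proof -
    have "?c = F (?cl (Z e))" using same[OF e0 that] by simp
    then show ?thesis using Z(1)[OF that] by blast
  qed
  have img: "(\<lambda>e. F ` (?cl ` e)) ` T = P4_edges" using F by (simp add: bij_betw_def)
  have "{0,1} \<in> P4_edges" "{2,3} \<in> P4_edges" by (simp_all add: P4_edges_def)
  then have "{0,1} \<in> (\<lambda>e. F ` (?cl ` e)) ` T" "{2,3} \<in> (\<lambda>e. F ` (?cl ` e)) ` T" using img by simp_all
  then obtain ea eb where ea: "ea \<in> T" "{0,1} = F ` (?cl ` ea)" and eb: "eb \<in> T" "{2,3} = F ` (?cl ` eb)"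
    by blast
  have "?c \<in> {0,1}" using inall[OF ea(1)] ea(2) by simp
  moreover have "?c \<in> {2,3}" using inall[OF eb(1)] eb(2) by simp
  ultimately show False by auto
qed

end



lemma card_pairs_sum: assumes "finite A"
  shows "(\<Sum>x\<in>A. \<Sum>y\<in>A. (if P x y then 1 else 0::nat)) = card {(x,y). x \<in> A \<and> y \<in> A \<and> P x y}"
proof -
  have "(\<Sum>x\<in>A. \<Sum>y\<in>A. (if P x y then 1 else 0::nat)) = (\<Sum>pr\<in>A \<times> A. (if P (fst pr) (snd pr) then 1 else 0))"
    by (simp add: sum.cartesian_product split_def)
  also have "\<dots> = (\<Sum>pr\<in>{pr \<in> A \<times> A. P (fst pr) (snd pr)}. 1)"
    by (rule sum.inter_filter[symmetric]) (simp add: assms)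
  also have "\<dots> = card {pr \<in> A \<times> A. P (fst pr) (snd pr)}" by simp
  also have "{pr \<in> A \<times> A. P (fst pr) (snd pr)} = {(x,y). x \<in> A \<and> y \<in> A \<and> P x y}" by auto
  finally show ?thesis .
qed

context tree begin

lemma pe_sep: "p \<in> V \<Longrightarrow> q \<in> V \<Longrightarrow> path_edges (spath E p q) = {g\<in>E. sep E g p q}"
  using sp_E by (auto simp: sep_def)

lemma dist_sum: "(\<Sum>p\<in>V. \<Sum>q\<in>V. tdist E p q) = 2 * (\<Sum>g\<in>E. card (cutA g) * card (V - cutA g))"
proof -
  have "(\<Sum>p\<in>V. \<Sum>q\<in>V. tdist E p q) = (\<Sum>p\<in>V. \<Sum>q\<in>V. \<Sum>g\<in>E. if sep E g p q then 1 else 0)"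
  proof (intro sum.cong refl)
    fix p q assume "p \<in> V" "q \<in> V"
    then have "tdist E p q = card {g\<in>E. sep E g p q}" using tdist_sp pe_sep by simp
    also have "\<dots> = (\<Sum>g\<in>{g\<in>E. sep E g p q}. 1)" by simp
    also have "\<dots> = (\<Sum>g\<in>E. if sep E g p q then 1 else 0)" using finE by (rule sum.inter_filter)
    finally show "tdist E p q = (\<Sum>g\<in>E. if sep E g p q then 1 else 0)" .
  qed
  also have "\<dots> = (\<Sum>p\<in>V. \<Sum>g\<in>E. \<Sum>q\<in>V. if sep E g p q then 1 else 0)"
    by (intro sum.cong refl sum.swap)
  also have "\<dots> = (\<Sum>g\<in>E. \<Sum>p\<in>V. \<Sum>q\<in>V. if sep E g p q then 1 else 0)" by (rule sum.swap)
  also have "\<dots> = (\<Sum>g\<in>E. card {(x,y). x \<in> V \<and> y \<in> V \<and> sep E g x y})"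
    using card_pairs_sum[OF finV] by simp
  also have "\<dots> = (\<Sum>g\<in>E. 2 * (card (cutA g) * card (V - cutA g)))"
    using pair_count by simp
  finally show ?thesis by (simp add: sum_distrib_left)
qed

lemma cut_sum: assumes g: "g \<in> E"
  shows "card (cutA g) * card (V - cutA g) = card {T. mid g T} + (card V - 1)"
proof -
  have c: "cutprop g (cutA g)" using cutA[OF g] .
  have AV: "cutA g \<subseteq> V" using c by (simp add: cutprop_def)
  have p: "1 \<le> card (cutA g)" "1 \<le> card (V - cutA g)" using c by (simp_all add: cutprop_def)
  have s: "card (cutA g) + card (V - cutA g) = card V"
    using AV finV by (metis card_Diff_subset card_mono le_add_diff_inverse rev_finite_subset)
  have m: "card {T. mid g T} = (card (cutA g) - 1) * (card (V - cutA g) - 1)" using mid_count[OF g] .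
  obtain a b where ab: "card (cutA g) = Suc a" "card (V - cutA g) = Suc b" using p
    by (metis Suc_le_D One_nat_def)
  show ?thesis using m s ab by (simp add: algebra_simps)
qed

lemma part1: "(\<Sum>g\<in>E. card (cutA g) * card (V - cutA g)) = (card V - 1)^2 + card (triples_on_path E)"
proof -
  have "(\<Sum>g\<in>E. card (cutA g) * card (V - cutA g)) = (\<Sum>g\<in>E. card {T. mid g T} + (card V - 1))"
    using cut_sum by simp
  also have "\<dots> = card (triples_on_path E) + card E * (card V - 1)"
    by (simp add: sum.distrib card_Tr)
  also have "card E = card V - 1" using cE by simp
  finally show ?thesis by (simp add: power2_eq_square)
qed

lemma part2: assumes "card V \<ge> 4"
  shows "card {S. S \<subseteq> E \<and> card S = card V - 4 \<and> contracts_to_P4 V E S} = card (triples_on_path E)"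
proof -
  let ?Tr = "triples_on_path E"
  let ?Ss = "{S. S \<subseteq> E \<and> card S = card V - 4 \<and> contracts_to_P4 V E S}"
  have cE': "card E = card V - 1" using cE by simp
  have "bij_betw (\<lambda>T. E - T) ?Tr ?Ss"
  proof (rule bij_betw_imageI)
    show "inj_on (\<lambda>T. E - T) ?Tr"
    proof (rule inj_onI)
      fix T1 T2 assume "T1 \<in> ?Tr" "T2 \<in> ?Tr" "E - T1 = E - T2"
      moreover have "T1 \<subseteq> E" "T2 \<subseteq> E" using \<open>T1 \<in> ?Tr\<close> \<open>T2 \<in> ?Tr\<close> by (auto simp: triples_on_path_def)
      ultimately show "T1 = T2" by blast
    qed
    show "(\<lambda>T. E - T) ` ?Tr = ?Ss"
    proof
      show "(\<lambda>T. E - T) ` ?Tr \<subseteq> ?Ss"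
      proof
        fix S assume "S \<in> (\<lambda>T. E - T) ` ?Tr"
        then obtain T where T: "T \<in> ?Tr" "S = E - T" by blast
        have TE: "T \<subseteq> E" "card T = 3" using T(1) by (auto simp: triples_on_path_def)
        obtain ps i j k where c: "config ps i j k" "T = {ed ps i, ed ps j, ed ps k}" using Tr_config[OF T(1)] by blast
        have "contracts_to_P4 V E (E - T)" using config_contracts[OF c] .
        moreover have "card (E - T) = card V - 4"
        proof -
          have "finite T" using TE(1) finE by (rule finite_subset)
          then have "card (E - T) = card E - card T" using TE(1) by (rule card_Diff_subset)
          then show ?thesis using TE(2) cE' by simp
        qed
        ultimately show "S \<in> ?Ss" using T(2) by auto
      qed
      show "?Ss \<subseteq> (\<lambda>T. E - T) ` ?Tr"
      proof
        fix S assume S: "S \<in> ?Ss"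
        then have SE: "S \<subseteq> E" "card S = card V - 4" "contracts_to_P4 V E S" by auto
        let ?T = "E - S"
        have "E - ?T = S" using SE by blast
        moreover have "card ?T = 3"
        proof -
          have "finite S" using SE(1) finE by (rule finite_subset)
          then have "card ?T = card E - card S" using SE(1) by (rule card_Diff_subset)
          then show ?thesis using SE(2) cE' assms by simp
        qed
        moreover have "?T \<subseteq> E" by blast
        moreover have "contracts_to_P4 V E (E - ?T)" using SE(3) \<open>E - ?T = S\<close> by simp
        ultimately have "?T \<in> ?Tr" using contracts_Tr[of ?T] by blast
        then show "S \<in> (\<lambda>T. E - T) ` ?Tr" using \<open>E - ?T = S\<close> by (rule rev_image_eqI[OF _ sym])
      qed
    qed
  qed
  then show ?thesis by (simp add: bij_betw_same_card)
qed

end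

theorem theorem4p6:
  fixes V :: "'a set" and E :: "'a set set"
  assumes "is_tree V E"
  shows "wiener V E = real ((card V - 1)^2 + card (triples_on_path E)) \<and>
         (card V \<ge> 4 \<longrightarrow> wiener V E = real ((card V - 1)^2 +
           card {S. S \<subseteq> E \<and> card S = card V - 4 \<and> contracts_to_P4 V E S}))"
proof -
  interpret tree V E using assms by unfold_locales
  have s: "(\<Sum>p\<in>V. \<Sum>q\<in>V. real (tdist E p q)) = real (\<Sum>p\<in>V. \<Sum>q\<in>V. tdist E p q)"
    by (simp only: of_nat_sum)
  have "wiener V E = (1/2) * real (2 * (\<Sum>g\<in>E. card (cutA g) * card (V - cutA g)))"
    unfolding wiener_def s dist_sum by (rule refl)
  also have "\<dots> = real (\<Sum>g\<in>E. card (cutA g) * card (V - cutA g))" by simp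
  also have "\<dots> = real ((card V - 1)^2 + card (triples_on_path E))" by (simp only: part1)
  finally have w: "wiener V E = real ((card V - 1)^2 + card (triples_on_path E))" .
  show ?thesis
  proof (intro conjI impI)
    show "wiener V E = real ((card V - 1)^2 + card (triples_on_path E))" by (rule w)
    assume "card V \<ge> 4"
    then have "card {S. S \<subseteq> E \<and> card S = card V - 4 \<and> contracts_to_P4 V E S} = card (triples_on_path E)"
      by (rule part2)
    then show "wiener V E = real ((card V - 1)^2 +
           card {S. S \<subseteq> E \<and> card S = card V - 4 \<and> contracts_to_P4 V E S})" using w by simp
  qed
qed



end
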